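(* The complete bipartite graph $K_{2,2}$ is not isomorphic to the rook equivalence graph $G(B)$ of any Ferrers board $B$.
   Context: A Ferrers board is given by a weakly increasing sequence of non-negative integers $B=(b_1,\ldots,b_n)$ of column heights; it is the set of unit cells in the first quadrant lying in column $i$ and rows $1,\ldots,b_i$. Prepending columns of height $0$ on the left does not change the board, and boards are compared using the same number of columns by such padding. A placement of $k$ rooks on $B$ is a set of $k$ cells of $B$ no two in the same row or column; $r_k(B)$ is the number of such placements. Two boards are rook equivalent if they have equal $r_k$ for all $k\ge 0$. The rook equivalence graph $G(B)$ has as vertices all Ferrers boards rook equivalent to $B$, and $\{B_1,B_2\}$ is an edge iff, written with the same number of columns, $B_1$ and $B_2$ differ in exactly two columns $i$ and $j$, where $B_1$ has $k$ more cells than $B_2$ in column $i$ and $k$ fewer cells than $B_2$ in column $j$, for some $k>0$. *)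

theory Defs
  imports Main
begin

text \<open>A Ferrers board is a weakly increasing list of column heights.\<close>
definition ferrers :: "nat list \<Rightarrow> bool" where
  "ferrers b \<longleftrightarrow> sorted b"

definition cells :: "nat list \<Rightarrow> (nat \<times> nat) set" where
  "cells b = {(i, j). i < length b \<and> 1 \<le> j \<and> j \<le> b ! i}"

definition rook_placements :: "nat list \<Rightarrow> nat \<Rightarrow> (nat \<times> nat) set set" where
  "rook_placements b k = {P. P \<subseteq> cells b \<and> card P = k \<and>
     (\<forall>p\<in>P. \<forall>q\<in>P. p \<noteq> q \<longrightarrow> fst p \<noteq> fst q \<and> snd p \<noteq> snd q)}"

definition rook_num :: "nat list \<Rightarrow> nat \<Rightarrow> nat" where
  "rook_num b k = card (rook_placements b k)"

definition rook_equiv :: "nat list \<Rightarrow> nat list \<Rightarrow> bool" where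
  "rook_equiv b1 b2 \<longleftrightarrow> (\<forall>k. rook_num b1 k = rook_num b2 k)"

definition pad :: "nat \<Rightarrow> nat list \<Rightarrow> nat list" where
  "pad n b = replicate (n - length b) 0 @ b"

text \<open>Canonical representative of a board up to left zero-padding: no zero columns.\<close>
definition reduced_board :: "nat list \<Rightarrow> bool" where
  "reduced_board b \<longleftrightarrow> ferrers b \<and> (\<forall>x\<in>set b. 0 < x)"

definition rook_graph_vertices :: "nat list \<Rightarrow> nat list set" where
  "rook_graph_vertices B = {B'. reduced_board B' \<and> rook_equiv B' B}"

definition rook_graph_edge :: "nat list \<Rightarrow> nat list \<Rightarrow> bool" where
  "rook_graph_edge B1 B2 \<longleftrightarrow>
     (let n = max (length B1) (length B2); c1 = pad n B1; c2 = pad n B2 in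
      \<exists>i j k. i < n \<and> j < n \<and> i \<noteq> j \<and> 0 < k \<and>
        c1 ! i = c2 ! i + k \<and> c1 ! j + k = c2 ! j \<and>
        (\<forall>l<n. l \<noteq> i \<longrightarrow> l \<noteq> j \<longrightarrow> c1 ! l = c2 ! l))"

text \<open>K_{2,2} on vertex set {0,1,2,3} with parts {0,1} and {2,3}.\<close>
definition k22_adj :: "nat \<Rightarrow> nat \<Rightarrow> bool" where
  "k22_adj x y \<longleftrightarrow> ((x < 2) \<noteq> (y < 2))"

definition graph_iso_K22 :: "'a set \<Rightarrow> ('a \<Rightarrow> 'a \<Rightarrow> bool) \<Rightarrow> bool" where
  "graph_iso_K22 V E \<longleftrightarrow> (\<exists>f. bij_betw f V {0..<4::nat} \<and>
     (\<forall>x\<in>V. \<forall>y\<in>V. E x y \<longleftrightarrow> k22_adj (f x) (f y)))"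

end

theory Submission
  imports Defs "HOL-Library.Multiset"
begin

fun Rr :: "int list \<Rightarrow> nat \<Rightarrow> int" where
  "Rr xs 0 = 1"
| "Rr [] (Suc k) = 0"
| "Rr (c # xs) (Suc k) = Rr xs (Suc k) + (c + int (length xs) - int k) * Rr xs k"

lemma Rr_swap: "Rr (e # f # xs) k = Rr (f # e # xs) k"
proof (cases k)
  case 0 then show ?thesis by simp
next
  case (Suc k1)
  then show ?thesis
  proof (cases k1)
    case 0 then show ?thesis using Suc by simp
  next
    case (Suc k2)
    then show ?thesis using \<open>k = Suc k1\<close>
      by (simp add: algebra_simps)
  qed
qed

lemma Rr_cons_cong:
  assumes "\<And>k. Rr xs k = Rr ys k" "length xs = length ys"
  shows "Rr (c # xs) k = Rr (c # ys) k"
  using assms by (cases k) auto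

lemma Rr_move: "Rr (ys1 @ x # ys2) k = Rr (x # ys1 @ ys2) k"
proof (induction ys1 arbitrary: k)
  case Nil then show ?case by simp
next
  case (Cons a ys1)
  have "Rr ((a # ys1) @ x # ys2) k = Rr (a # (ys1 @ x # ys2)) k" by simp
  also have "\<dots> = Rr (a # (x # ys1 @ ys2)) k"
    by (rule Rr_cons_cong) (use Cons in auto)
  also have "\<dots> = Rr (x # a # ys1 @ ys2) k" by (rule Rr_swap)
  finally show ?case by simp
qed

lemma Rr_mset: "mset xs = mset ys \<Longrightarrow> Rr xs k = Rr ys k"
proof (induction xs arbitrary: ys k)
  case Nil then show ?case by simp
next
  case (Cons x xs)
  then have "x \<in> set ys" by (metis list.set_intros(1) set_mset_mset)
  then obtain ys1 ys2 where ys: "ys = ys1 @ x # ys2" by (meson split_list)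
  have ms: "mset xs = mset (ys1 @ ys2)" using Cons.prems ys by simp
  have "Rr ys k = Rr (x # ys1 @ ys2) k" using ys Rr_move by simp
  also have "\<dots> = Rr (x # xs) k"
    by (rule Rr_cons_cong) (use Cons.IH[OF ms] mset_eq_length[OF ms] in auto)
  finally show ?case by simp
qed

lemma cells_sub: "cells b \<subseteq> (SIGMA i:{..<length b}. {1..b!i})"
  unfolding cells_def by auto

lemma finite_cells: "finite (cells b)"
  by (rule finite_subset[OF cells_sub]) auto

lemma finite_rp: "finite (rook_placements b k)"
proof -
  have "rook_placements b k \<subseteq> Pow (cells b)" unfolding rook_placements_def by auto
  then show ?thesis using finite_cells by (meson finite_Pow_iff finite_subset)
qed

lemma rp_rows:
  assumes P: "P \<in> rook_placements b k" and hb: "\<forall>t\<in>set b. t \<le> h"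
  shows "snd ` P \<subseteq> {1..h}" "card (snd ` P) = k" "inj_on snd P"
proof -
  have sub: "P \<subseteq> cells b" and cP: "card P = k"
    and na: "\<forall>p\<in>P. \<forall>q\<in>P. p \<noteq> q \<longrightarrow> fst p \<noteq> fst q \<and> snd p \<noteq> snd q"
    using P unfolding rook_placements_def by auto
  show "snd ` P \<subseteq> {1..h}"
  proof
    fix r assume "r \<in> snd ` P"
    then obtain i where "(i, r) \<in> P" by auto
    then have "(i, r) \<in> cells b" using sub by auto
    then have "i < length b" "1 \<le> r" "r \<le> b ! i" unfolding cells_def by auto
    moreover have "b ! i \<le> h" using hb \<open>i < length b\<close> by auto
    ultimately show "r \<in> {1..h}" by auto
  qed
  show inj: "inj_on snd P"
    by (rule inj_onI) (use na in blast)
  show "card (snd ` P) = k" using card_image[OF inj] cP by simp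
qed

lemma rook_num_big:
  assumes "h < k" "\<forall>t\<in>set b. t \<le> h"
  shows "rook_num b k = 0"
proof -
  have "rook_placements b k = {}"
  proof (rule ccontr)
    assume "rook_placements b k \<noteq> {}"
    then obtain P where P: "P \<in> rook_placements b k" by auto
    have "card (snd ` P) \<le> card {1..h}"
      by (rule card_mono) (use rp_rows(1)[OF P assms(2)] in auto)
    then show False using rp_rows(2)[OF P assms(2)] assms(1) by simp
  qed
  then show ?thesis unfolding rook_num_def by simp
qed

lemma rook_num_0: "rook_num b 0 = 1"
proof -
  have "rook_placements b 0 = {{}}"
  proof (rule set_eqI, rule iffI)
    fix P assume "P \<in> rook_placements b 0"
    then have "P \<subseteq> cells b" "card P = 0" unfolding rook_placements_def by auto
    moreover have "finite P" using \<open>P \<subseteq> cells b\<close> finite_cells by (rule finite_subset)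
    ultimately show "P \<in> {{}}" by simp
  next
    fix P :: "(nat \<times> nat) set" assume "P \<in> {{}}"
    then show "P \<in> rook_placements b 0" unfolding rook_placements_def by simp
  qed
  then show ?thesis unfolding rook_num_def by simp
qed

lemma rook_num_Nil: "rook_num [] (Suc k) = 0"
proof -
  have c: "cells [] = {}" unfolding cells_def by simp
  have "rook_placements [] (Suc k) = {}"
  proof (rule equals0I)
    fix P assume "P \<in> rook_placements [] (Suc k)"
    then have "P \<subseteq> {}" "card P = Suc k" unfolding rook_placements_def c by auto
    then show False by simp
  qed
  then show ?thesis unfolding rook_num_def by simp
qed

lemma cells_snoc: "cells (b @ [h]) = cells b \<union> {(length b, j) | j. 1 \<le> j \<and> j \<le> h}"
proof -
  have "\<And>i j. (i, j) \<in> cells (b @ [h]) \<longleftrightarrow> (i, j) \<in> cells b \<or> (i = length b \<and> 1 \<le> j \<and> j \<le> h)"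
  proof -
    fix i j
    show "(i, j) \<in> cells (b @ [h]) \<longleftrightarrow> (i, j) \<in> cells b \<or> (i = length b \<and> 1 \<le> j \<and> j \<le> h)"
      unfolding cells_def
      by (cases "i < length b"; cases "i = length b") (auto simp: nth_append)
  qed
  then show ?thesis by auto
qed

lemma rook_num_snoc:
  assumes hb: "\<forall>t\<in>set b. t \<le> h"
  shows "rook_num (b @ [h]) (Suc k) = rook_num b (Suc k) + (h - k) * rook_num b k"
proof -
  let ?n = "length b"
  let ?R = "rook_placements (b @ [h]) (Suc k)"
  define S1 where "S1 = {P \<in> ?R. \<forall>p\<in>P. fst p \<noteq> ?n}"
  define S2 where "S2 = {P \<in> ?R. \<exists>p\<in>P. fst p = ?n}"
  define Sig where "Sig = (SIGMA P':rook_placements b k. {1..h} - snd ` P')"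
  define F where "F = (\<lambda>(P'::(nat\<times>nat) set, r::nat). insert (?n, r) P')"
  have cb: "\<And>p. p \<in> cells b \<Longrightarrow> fst p < ?n" unfolding cells_def by auto
  have R_un: "?R = S1 \<union> S2" "S1 \<inter> S2 = {}" unfolding S1_def S2_def by auto
  have S1_eq: "S1 = rook_placements b (Suc k)"
  proof
    show "S1 \<subseteq> rook_placements b (Suc k)"
    proof
      fix P assume "P \<in> S1"
      then have "P \<in> ?R" "\<forall>p\<in>P. fst p \<noteq> ?n" unfolding S1_def by auto
      then have "P \<subseteq> cells b"
      proof -
        have s: "P \<subseteq> cells b \<union> {(length b, j) | j. 1 \<le> j \<and> j \<le> h}"
          using \<open>P \<in> ?R\<close> unfolding rook_placements_def cells_snoc by simp
        show ?thesis
        proof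
          fix p assume "p \<in> P"
          then have "p \<in> cells b \<or> fst p = length b" using s by auto
          then show "p \<in> cells b" using \<open>\<forall>p\<in>P. fst p \<noteq> ?n\<close> \<open>p \<in> P\<close> by auto
        qed
      qed
      then show "P \<in> rook_placements b (Suc k)"
        using \<open>P \<in> ?R\<close> unfolding rook_placements_def by auto
    qed
  next
    show "rook_placements b (Suc k) \<subseteq> S1"
      unfolding S1_def rook_placements_def cells_snoc using cb by fastforce
  qed
  have S2_eq: "S2 = F ` Sig"
  proof
    show "F ` Sig \<subseteq> S2"
    proof
      fix Q assume "Q \<in> F ` Sig"
      then obtain P' r where Pr: "P' \<in> rook_placements b k" "r \<in> {1..h}" "r \<notin> snd ` P'"
        and Q: "Q = insert (?n, r) P'" unfolding Sig_def F_def by auto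
      have sub: "P' \<subseteq> cells b" and cP: "card P' = k"
        and na: "\<forall>p\<in>P'. \<forall>q\<in>P'. p \<noteq> q \<longrightarrow> fst p \<noteq> fst q \<and> snd p \<noteq> snd q"
        using Pr(1) unfolding rook_placements_def by auto
      have fin: "finite P'" using sub finite_cells finite_subset by blast
      have notin: "(?n, r) \<notin> P'" using sub cb by fastforce
      have "card Q = Suc k" using Q fin notin cP by simp
      moreover have "Q \<subseteq> cells (b @ [h])" using Q sub Pr(2) unfolding cells_snoc by auto
      moreover have "\<forall>p\<in>Q. \<forall>q\<in>Q. p \<noteq> q \<longrightarrow> fst p \<noteq> fst q \<and> snd p \<noteq> snd q"
      proof (intro ballI impI)
        fix p q assume pQ: "p \<in> Q" and qQ: "q \<in> Q" and pq: "p \<noteq> q"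
        have aux: "fst t \<noteq> ?n \<and> snd t \<noteq> r" if "t \<in> P'" for t
        proof
          show "fst t \<noteq> ?n" using cb sub that by (metis less_irrefl subsetD)
          show "snd t \<noteq> r" using Pr(3) that by (metis image_eqI)
        qed
        show "fst p \<noteq> fst q \<and> snd p \<noteq> snd q"
        proof (cases "p = (?n, r)")
          case True
          then have "q \<in> P'" using qQ pq Q by auto
          from aux[OF this] True show ?thesis by auto
        next
          case False
          then have pP: "p \<in> P'" using pQ Q by auto
          show ?thesis
          proof (cases "q = (?n, r)")
            case True
            then show ?thesis using aux[OF pP] by auto
          next
            case False
            then have "q \<in> P'" using qQ Q by auto
            then show ?thesis using na pP pq by blast
          qed
        qed
      qed
      ultimately show "Q \<in> S2" unfolding S2_def rook_placements_def using Q by auto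
    qed
  next
    show "S2 \<subseteq> F ` Sig"
    proof
      fix Q assume "Q \<in> S2"
      then have QR: "Q \<in> ?R" and ex: "\<exists>p\<in>Q. fst p = ?n" unfolding S2_def by auto
      have sub: "Q \<subseteq> cells (b @ [h])" and cQ: "card Q = Suc k"
        and na: "\<forall>p\<in>Q. \<forall>q\<in>Q. p \<noteq> q \<longrightarrow> fst p \<noteq> fst q \<and> snd p \<noteq> snd q"
        using QR unfolding rook_placements_def by auto
      obtain r where rQ: "(?n, r) \<in> Q" using ex by auto
      define P' where "P' = Q - {(?n, r)}"
      have fin: "finite Q" using sub finite_cells finite_subset by blast
      have P'sub: "P' \<subseteq> cells b"
      proof
        fix p assume "p \<in> P'"
        then have "p \<in> Q" "p \<noteq> (?n, r)" unfolding P'_def by auto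
        then have "fst p \<noteq> fst (?n, r)" using na rQ by blast
        then have "fst p \<noteq> ?n" by simp
        then show "p \<in> cells b" using sub \<open>p \<in> Q\<close> unfolding cells_snoc by auto
      qed
      have "card P' = k" unfolding P'_def using cQ rQ fin by simp
      then have P'rp: "P' \<in> rook_placements b k"
        unfolding rook_placements_def using P'sub na unfolding P'_def by auto
      have "(?n, r) \<in> cells (b @ [h])" using rQ sub by blast
      then have "(?n, r) \<in> cells b \<or> (1 \<le> r \<and> r \<le> h)" unfolding cells_snoc by blast
      moreover have "(?n, r) \<notin> cells b" using cb by fastforce
      ultimately have r1: "r \<in> {1..h}" by auto
      have r2: "r \<notin> snd ` P'"
      proof
        assume "r \<in> snd ` P'"
        then obtain p where "p \<in> P'" "snd p = r" by auto
        then have "p \<in> Q" "p \<noteq> (?n, r)" unfolding P'_def by auto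
        then have "snd p \<noteq> snd (?n, r)" using na rQ by blast
        then show False using \<open>snd p = r\<close> by simp
      qed
      have "Q = F (P', r)" unfolding F_def P'_def using rQ by auto
      moreover have "(P', r) \<in> Sig" unfolding Sig_def using P'rp r1 r2 by auto
      ultimately show "Q \<in> F ` Sig" by blast
    qed
  qed
  have inj: "inj_on F Sig"
  proof (rule inj_onI)
    fix x y assume x: "x \<in> Sig" and y: "y \<in> Sig" and eq: "F x = F y"
    obtain P1 r1 where x': "x = (P1, r1)" by fastforce
    obtain P2 r2 where y': "y = (P2, r2)" by fastforce
    have s1: "P1 \<subseteq> cells b" using x x' unfolding Sig_def rook_placements_def by auto
    have s2: "P2 \<subseteq> cells b" using y y' unfolding Sig_def rook_placements_def by auto
    have e: "insert (?n, r1) P1 = insert (?n, r2) P2" using eq x' y' unfolding F_def by simp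
    have "(?n, r1) \<notin> P2" using s2 cb by fastforce
    then have "r1 = r2" using e by (metis insertE insertI1 prod.inject)
    moreover have "(?n, r1) \<notin> P1" using s1 cb by fastforce
    ultimately have "P1 = P2" using e \<open>(?n, r1) \<notin> P2\<close>
      by (metis Diff_insert_absorb)
    then show "x = y" using x' y' \<open>r1 = r2\<close> by simp
  qed
  have cSig: "card Sig = (\<Sum>P'\<in>rook_placements b k. card ({1..h} - snd ` P'))"
    unfolding Sig_def by (rule card_SigmaI) (auto simp: finite_rp)
  also have "\<dots> = (\<Sum>P'\<in>rook_placements b k. h - k)"
  proof (rule sum.cong)
    fix P' assume P': "P' \<in> rook_placements b k"
    have "card ({1..h} - snd ` P') = card {1..h} - card (snd ` P')"
      by (rule card_Diff_subset) (use rp_rows(1)[OF P' hb] finite_subset in auto)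
    then show "card ({1..h} - snd ` P') = h - k" using rp_rows(2)[OF P' hb] by simp
  qed simp
  finally have cSig': "card Sig = (h - k) * rook_num b k" unfolding rook_num_def by simp
  have "rook_num (b @ [h]) (Suc k) = card S1 + card S2"
    unfolding rook_num_def R_un(1)
    by (rule card_Un_disjoint) (use R_un finite_rp[of "b @ [h]" "Suc k"] in auto)
  also have "card S2 = card Sig" unfolding S2_eq by (rule card_image[OF inj])
  finally show ?thesis using S1_eq cSig' unfolding rook_num_def by simp
qed

definition cl :: "nat list \<Rightarrow> int list" where
  "cl b = map (\<lambda>l. int (b ! l) - int l) [0..<length b]"

lemma length_cl[simp]: "length (cl b) = length b"
  unfolding cl_def by simp

lemma nth_cl: "l < length b \<Longrightarrow> cl b ! l = int (b ! l) - int l"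
  unfolding cl_def by simp

lemma cl_snoc: "cl (b @ [h]) = cl b @ [int h - int (length b)]"
proof -
  have "cl (b @ [h]) = map (\<lambda>l. int ((b @ [h]) ! l) - int l) [0..<length b] @ [int h - int (length b)]"
    unfolding cl_def by (simp add: nth_append)
  also have "map (\<lambda>l. int ((b @ [h]) ! l) - int l) [0..<length b] = cl b"
    unfolding cl_def by (rule map_cong) (auto simp: nth_append)
  finally show ?thesis .
qed

lemma cl_cons0: "cl (0 # b) = 0 # map (\<lambda>c. c - 1) (cl b)"
proof -
  have "[0..<length (0 # b)] = 0 # map Suc [0..<length b]"
    by (simp add: map_Suc_upt upt_conv_Cons del: upt_Suc)
  then have "cl (0 # b) = 0 # map (\<lambda>l. int ((0 # b) ! Suc l) - int (Suc l)) [0..<length b]"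
    unfolding cl_def by simp
  also have "map (\<lambda>l. int ((0 # b) ! Suc l) - int (Suc l)) [0..<length b] = map (\<lambda>c. c - 1) (cl b)"
    unfolding cl_def by simp
  finally show ?thesis .
qed

lemma rook_Rr: "sorted b \<Longrightarrow> int (rook_num b k) = Rr (rev (cl b)) k"
proof (induction b arbitrary: k rule: rev_induct)
  case Nil
  then show ?case by (cases k) (auto simp: rook_num_0 rook_num_Nil cl_def)
next
  case (snoc h b)
  have sb: "sorted b" and hb: "\<forall>t\<in>set b. t \<le> h" using snoc.prems by (auto simp: sorted_append)
  show ?case
  proof (cases k)
    case 0 then show ?thesis by (simp add: rook_num_0)
  next
    case (Suc k')
    have IH1: "int (rook_num b (Suc k')) = Rr (rev (cl b)) (Suc k')" using snoc.IH[OF sb] .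
    have IH2: "int (rook_num b k') = Rr (rev (cl b)) k'" using snoc.IH[OF sb] .
    have "int ((h - k') * rook_num b k') = (int h - int k') * Rr (rev (cl b)) k'"
    proof (cases "k' \<le> h")
      case True then show ?thesis using IH2 by (simp add: of_nat_diff)
    next
      case False
      then have "rook_num b k' = 0" using rook_num_big[of h k' b] hb by simp
      then show ?thesis using IH2 by simp
    qed
    then show ?thesis using Suc IH1
      by (simp add: rook_num_snoc[OF hb] cl_snoc)
  qed
qed

lemma Rr_shift: "Rr (map (\<lambda>c. c - 1) xs @ [0]) k = Rr xs k"
proof (induction xs arbitrary: k)
  case Nil
  then show ?case
  proof (cases k)
    case (Suc k') then show ?thesis by (cases k') auto
  qed simp
next
  case (Cons c xs)
  then show ?case by (cases k) (auto simp: algebra_simps)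
qed

lemma rook_num_cons0: "sorted b \<Longrightarrow> rook_num (0 # b) k = rook_num b k"
proof -
  assume sb: "sorted b"
  then have "sorted (0 # b)" by simp
  have "int (rook_num (0 # b) k) = Rr (rev (cl (0 # b))) k" using rook_Rr[OF \<open>sorted (0 # b)\<close>] .
  also have "rev (cl (0 # b)) = map (\<lambda>c. c - 1) (rev (cl b)) @ [0]"
    by (simp add: cl_cons0 rev_map)
  also have "Rr \<dots> k = Rr (rev (cl b)) k" by (rule Rr_shift)
  also have "\<dots> = int (rook_num b k)" using rook_Rr[OF sb] by simp
  finally show ?thesis by simp
qed

lemma rook_num_pad: "sorted b \<Longrightarrow> rook_num (pad n b) k = rook_num b k"
proof -
  assume sb: "sorted b"
  have "\<And>m. rook_num (replicate m 0 @ b) k = rook_num b k"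
  proof -
    fix m show "rook_num (replicate m 0 @ b) k = rook_num b k"
    proof (induction m)
      case (Suc m)
      have "sorted (replicate m 0 @ b)" using sb by (auto simp: sorted_append)
      then show ?case using Suc rook_num_cons0 by simp
    qed simp
  qed
  then show ?thesis unfolding pad_def by simp
qed


definition ok :: "int list \<Rightarrow> bool" where
  "ok xs \<longleftrightarrow> successively (\<lambda>a b. a \<le> b + 1) xs"

definition valid :: "int list \<Rightarrow> bool" where
  "valid c \<longleftrightarrow> ok (1 # c)"

definition sw :: "int list \<Rightarrow> int list \<Rightarrow> bool" where
  "sw xs ys \<longleftrightarrow> length xs = length ys \<and>
     (\<exists>i j. i < length xs \<and> j < length xs \<and> i \<noteq> j \<and> ys ! i < xs ! i \<and>
        xs ! i - ys ! i = ys ! j - xs ! j \<and>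
        (\<forall>l<length xs. l \<noteq> i \<longrightarrow> l \<noteq> j \<longrightarrow> xs ! l = ys ! l))"

lemma sw_sym: "sw xs ys \<Longrightarrow> sw ys xs"
  unfolding sw_def
  by (elim conjE exE, rule conjI, simp, rule_tac x=j in exI, rule_tac x=i in exI) auto

lemma sw_irrefl: "\<not> sw xs xs"
  unfolding sw_def by auto

lemma sw_intro:
  assumes "length X = length Y" "i < length X" "j < length X" "i \<noteq> j" "Y ! i < X ! i"
    "X ! i - Y ! i = Y ! j - X ! j" "\<forall>l<length X. l \<noteq> i \<longrightarrow> l \<noteq> j \<longrightarrow> X ! l = Y ! l"
  shows "sw X Y"
  unfolding sw_def using assms by blast

lemma nth_rep_form:
  assumes "t < a + b + 1"
  shows "(replicate a x @ y # replicate b x) ! t = (if t = a then y else x)"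
  using assms by (auto simp: nth_append nth_Cons' )

lemma sw_form:
  fixes x y :: int
  assumes "a + b = a' + b'" "a \<noteq> a'" "x \<noteq> y"
  shows "sw (u @ (replicate a x @ y # replicate b x) @ v) (u @ (replicate a' x @ y # replicate b' x) @ v)"
proof -
  let ?M1 = "replicate a x @ y # replicate b x"
  let ?M2 = "replicate a' x @ y # replicate b' x"
  let ?X = "u @ ?M1 @ v" and ?Y = "u @ ?M2 @ v"
  have len: "length ?M1 = length ?M2" using assms(1) by simp
  have nX: "?X ! l = (if l < length u then u ! l else if l < length u + a + b + 1
              then (if l = length u + a then y else x) else v ! (l - (length u + a + b + 1)))" for l
    by (auto simp: nth_append nth_rep_form)
  have nY0: "?Y ! l = (if l < length u then u ! l else if l < length u + a' + b' + 1
              then (if l = length u + a' then y else x) else v ! (l - (length u + a' + b' + 1)))" for l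
    by (auto simp: nth_append nth_rep_form)
  have nY: "?Y ! l = (if l < length u then u ! l else if l < length u + a + b + 1
              then (if l = length u + a' then y else x) else v ! (l - (length u + a + b + 1)))" for l
    unfolding nY0 using assms(1) by (simp add: add.assoc)
  have lenX: "length ?X = length u + a + b + 1 + length v" by simp
  have lenXY: "length ?X = length ?Y" using assms(1) by simp
  have e1: "?X ! (length u + a) = y" unfolding nX by simp
  have e2: "?Y ! (length u + a) = x" using assms(2) unfolding nY by simp
  have e3: "?X ! (length u + a') = x" using assms(1,2) unfolding nX by simp
  have e4: "?Y ! (length u + a') = y" using assms(1,2) unfolding nY by simp
  have eq: "\<forall>l<length ?X. l \<noteq> length u + a \<longrightarrow> l \<noteq> length u + a' \<longrightarrow> ?X ! l = ?Y ! l"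
    unfolding nX nY by simp
  have b1: "length u + a < length ?X" using lenX by simp
  have b2: "length u + a' < length ?X" using lenX assms(1) by simp
  have ne: "length u + a \<noteq> length u + a'" using assms(2) by simp
  show ?thesis
  proof (cases "x < y")
    case True
    show ?thesis
      by (rule sw_intro[OF lenXY b1 b2 ne]) (use e1 e2 e3 e4 eq True in auto)
  next
    case False
    then have "y < x" using assms(3) by simp
    show ?thesis
      by (rule sw_intro[OF lenXY b2 b1 ne[symmetric]]) (use e1 e2 e3 e4 eq \<open>y < x\<close> in auto)
  qed
qed


lemma dec:
  assumes "i < j" "j < length A"
  shows "A = take i A @ A ! i # take (j - Suc i) (drop (Suc i) A) @ A ! j # drop (Suc j) A"
proof -
  have A1: "A = take i A @ A ! i # drop (Suc i) A" using assms by (simp add: id_take_nth_drop)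
  let ?D = "drop (Suc i) A"
  have "j - Suc i < length ?D" using assms by simp
  then have D1: "?D = take (j - Suc i) ?D @ ?D ! (j - Suc i) # drop (Suc (j - Suc i)) ?D"
    by (rule id_take_nth_drop)
  have "?D ! (j - Suc i) = A ! j" using assms by simp
  moreover have "drop (Suc (j - Suc i)) ?D = drop (Suc j) A" using assms by simp
  ultimately show ?thesis using A1 D1 by (metis append_Cons append_Nil)
qed

lemma sw_dec:
  assumes "sw A S"
  shows "\<exists>u W v a b a' b'. A = u @ a # W @ b # v \<and> S = u @ a' # W @ b' # v \<and> a \<noteq> a' \<and> a + b = a' + b'"
proof -
  obtain i0 j0 where len: "length A = length S" and h: "i0 < length A" "j0 < length A" "i0 \<noteq> j0"
    "S ! i0 < A ! i0" "A ! i0 - S ! i0 = S ! j0 - A ! j0"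
    and eq: "\<forall>l<length A. l \<noteq> i0 \<longrightarrow> l \<noteq> j0 \<longrightarrow> A ! l = S ! l"
    using assms unfolding sw_def by blast
  define i where "i = min i0 j0"
  define j where "j = max i0 j0"
  have ij: "i < j" "j < length A" unfolding i_def j_def using h by auto
  have eq': "\<forall>l<length A. l \<noteq> i \<longrightarrow> l \<noteq> j \<longrightarrow> A ! l = S ! l"
    using eq unfolding i_def j_def by (auto simp: min_def max_def)
  have ne: "A ! i \<noteq> S ! i" using h unfolding i_def by (auto simp: min_def)
  have sum: "A ! i + A ! j = S ! i + S ! j" using h unfolding i_def j_def by (auto simp: min_def max_def)
  have "take i S = take i A"
    by (rule nth_equalityI) (use len eq' ij in auto)
  moreover have "take (j - Suc i) (drop (Suc i) S) = take (j - Suc i) (drop (Suc i) A)"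
    by (rule nth_equalityI) (use len eq' ij in auto)
  moreover have "drop (Suc j) S = drop (Suc j) A"
    by (rule nth_equalityI) (use len eq' ij in auto)
  moreover have "S = take i S @ S ! i # take (j - Suc i) (drop (Suc i) S) @ S ! j # drop (Suc j) S"
    using dec[of i j S] ij len by simp
  ultimately have "S = take i A @ S ! i # take (j - Suc i) (drop (Suc i) A) @ S ! j # drop (Suc j) A"
    by simp
  moreover have "A = take i A @ A ! i # take (j - Suc i) (drop (Suc i) A) @ A ! j # drop (Suc j) A"
    using dec[OF ij] .
  ultimately show ?thesis using ne sum by blast
qed

lemma Rr2: "Rr (e # f # R) 2 = Rr R 2 + (e + f + 2 * int (length R) - 1) * Rr R 1 + (e + int (length R)) * (f + int (length R))"
  by (simp add: numeral_2_eq_2 algebra_simps)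

lemma nec:
  assumes "sw A S" "\<And>k. Rr A k = Rr S k"
  shows "\<exists>u W v a b. A = u @ a # W @ b # v \<and> S = u @ b # W @ a # v \<and> a \<noteq> b"
proof -
  obtain u W v a b a' b' where A: "A = u @ a # W @ b # v" and S: "S = u @ a' # W @ b' # v"
    and ne: "a \<noteq> a'" and sm: "a + b = a' + b'"
    using sw_dec[OF assms(1)] by blast
  let ?R = "u @ W @ v"
  have "Rr A 2 = Rr (a # b # ?R) 2" by (rule Rr_mset) (simp add: A)
  moreover have "Rr S 2 = Rr (a' # b' # ?R) 2" by (rule Rr_mset) (simp add: S)
  ultimately have "Rr (a # b # ?R) 2 = Rr (a' # b' # ?R) 2" using assms(2) by simp
  then have "(a + int (length ?R)) * (b + int (length ?R)) = (a' + int (length ?R)) * (b' + int (length ?R))"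
    unfolding Rr2 using sm by simp
  then have "(a' - a) * (a' - b) = 0" using sm
    by (simp add: algebra_simps) (smt (verit) mult.commute ring_class.ring_distribs(1))
  then have "a' = b" using ne by simp
  then have "b' = a" using sm by simp
  show ?thesis using A S \<open>a' = b\<close> \<open>b' = a\<close> ne by blast
qed


fun ph :: "int \<Rightarrow> int list \<Rightarrow> int" where
  "ph n [] = 0"
| "ph n (c # cs) = n * c + ph (n + 1) cs"

definition phi :: "int list \<Rightarrow> int" where "phi c = ph 0 c"

lemma ph_append: "ph n (xs @ ys) = ph n xs + ph (n + int (length xs)) ys"
  by (induction xs arbitrary: n) (auto simp: algebra_simps)

lemma phi_swap: "phi (u @ b # W @ a # v) - phi (u @ a # W @ b # v) = (1 + int (length W)) * (a - b)"
  unfolding phi_def by (simp add: ph_append algebra_simps)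

lemma ok_Nil[simp]: "ok []" unfolding ok_def by simp

lemma ok_Cons: "ok (x # xs) \<longleftrightarrow> ok xs \<and> (xs = [] \<or> x \<le> hd xs + 1)"
  unfolding ok_def by (auto simp: successively_Cons)

lemma ok_app: "ok (xs @ ys) \<longleftrightarrow> ok xs \<and> ok ys \<and> (xs = [] \<or> ys = [] \<or> last xs \<le> hd ys + 1)"
  unfolding ok_def by (rule successively_append_iff)

lemma valid_nth: "valid c \<longleftrightarrow> (c \<noteq> [] \<longrightarrow> 0 \<le> c ! 0) \<and> (\<forall>l. Suc l < length c \<longrightarrow> c ! l \<le> c ! Suc l + 1)"
proof -
  have "valid c \<longleftrightarrow> (\<forall>i. Suc i < length (1 # c) \<longrightarrow> (1 # c) ! i \<le> (1 # c) ! Suc i + 1)"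
    unfolding valid_def ok_def successively_conv_nth by simp
  also have "\<dots> \<longleftrightarrow> (c \<noteq> [] \<longrightarrow> 0 \<le> c ! 0) \<and> (\<forall>l. Suc l < length c \<longrightarrow> c ! l \<le> c ! Suc l + 1)"
  proof
    assume H: "\<forall>i. Suc i < length (1 # c) \<longrightarrow> (1 # c) ! i \<le> (1 # c) ! Suc i + 1"
    show "(c \<noteq> [] \<longrightarrow> 0 \<le> c ! 0) \<and> (\<forall>l. Suc l < length c \<longrightarrow> c ! l \<le> c ! Suc l + 1)"
    proof
      show "c \<noteq> [] \<longrightarrow> 0 \<le> c ! 0" using H[rule_format, of 0] by simp
      show "\<forall>l. Suc l < length c \<longrightarrow> c ! l \<le> c ! Suc l + 1" using H[rule_format, of "Suc l" for l] by simp
    qed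
  next
    assume H: "(c \<noteq> [] \<longrightarrow> 0 \<le> c ! 0) \<and> (\<forall>l. Suc l < length c \<longrightarrow> c ! l \<le> c ! Suc l + 1)"
    show "\<forall>i. Suc i < length (1 # c) \<longrightarrow> (1 # c) ! i \<le> (1 # c) ! Suc i + 1"
    proof (intro allI impI)
      fix i assume "Suc i < length (1 # c)"
      then show "(1 # c) ! i \<le> (1 # c) ! Suc i + 1" using H by (cases i) auto
    qed
  qed
  finally show ?thesis .
qed

lemma valid_cl: "sorted b \<Longrightarrow> valid (cl b)"
  unfolding valid_nth
proof (intro conjI allI impI)
  assume "sorted b"
  show "cl b \<noteq> [] \<Longrightarrow> 0 \<le> cl b ! 0"
  proof -
    assume "cl b \<noteq> []"
    then have "0 < length (cl b)" by (simp del: length_cl)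
    then have "0 < length b" by simp
    then show ?thesis by (simp add: nth_cl)
  qed
  fix l assume l: "Suc l < length (cl b)"
  have "b ! l \<le> b ! Suc l" using \<open>sorted b\<close> l by (simp add: sorted_iff_nth_Suc)
  then show "cl b ! l \<le> cl b ! Suc l + 1" using l by (simp add: nth_cl)
qed

definition board_of :: "int list \<Rightarrow> nat list" where
  "board_of c = map (\<lambda>l. nat (c ! l + int l)) [0..<length c]"

lemma valid_nonneg: "valid c \<Longrightarrow> l < length c \<Longrightarrow> 0 \<le> c ! l + int l"
proof (induction l)
  case 0 then show ?case unfolding valid_nth by auto
next
  case (Suc l)
  then have "c ! l \<le> c ! Suc l + 1" unfolding valid_nth by auto
  then show ?case using Suc by simp
qed

lemma board_of_props:
  assumes "valid c"
  shows "sorted (board_of c)" "cl (board_of c) = c" "length (board_of c) = length c"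
proof -
  show "length (board_of c) = length c" unfolding board_of_def by simp
  show "cl (board_of c) = c"
    by (rule nth_equalityI) (auto simp: board_of_def nth_cl valid_nonneg[OF assms])
  show "sorted (board_of c)"
    unfolding sorted_iff_nth_Suc
  proof (intro allI impI)
    fix l assume l: "Suc l < length (board_of c)"
    then have "c ! l \<le> c ! Suc l + 1" using assms unfolding valid_nth board_of_def by auto
    then show "board_of c ! l \<le> board_of c ! Suc l" using l unfolding board_of_def by simp
  qed
qed

lemma D_k2:
  fixes x y :: int
  assumes vA: "valid (u @ x # W @ y # v)" and vS: "valid (u @ y # W @ x # v)" and k2: "x + 2 \<le> y"
  shows "valid (u @ x # y # W @ v)" "valid (u @ W @ x # y # v)"
    "u @ x # y # W @ v \<noteq> u @ x # W @ y # v" "u @ x # y # W @ v \<noteq> u @ y # W @ x # v"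
    "u @ W @ x # y # v \<noteq> u @ x # W @ y # v" "u @ W @ x # y # v \<noteq> u @ y # W @ x # v"
    "u @ x # y # W @ v \<noteq> u @ W @ x # y # v"
    "\<not> sw (u @ x # y # W @ v) (u @ W @ x # y # v)"
proof -
  have W: "W \<noteq> []"
  proof
    assume "W = []"
    then show False using vS k2 unfolding valid_def by (simp add: ok_app ok_Cons)
  qed
  have fA: "ok u" "ok W" "ok v" "v = [] \<or> y \<le> hd v + 1" "last W \<le> y + 1" "x \<le> hd W + 1"
    "u = [] \<or> last u \<le> x + 1" "u = [] \<or> 0 \<le> hd u" "u = [] \<longrightarrow> 0 \<le> x"
    using vA W unfolding valid_def by (auto simp: ok_app ok_Cons hd_append split: if_splits)
  have fS: "y \<le> hd W + 1" "last W \<le> x + 1"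
    using vS W unfolding valid_def by (auto simp: ok_app ok_Cons hd_append split: if_splits)
  show "valid (u @ x # y # W @ v)"
    using fA fS W k2 unfolding valid_def by (auto simp: ok_app ok_Cons hd_append split: if_splits)
  show "valid (u @ W @ x # y # v)"
    using fA fS W k2 unfolding valid_def by (auto simp: ok_app ok_Cons hd_append split: if_splits)
  have hW: "x < hd W" "last W < y" using fS k2 by auto
  have lW: "last (x # W) = last W" using W by simp
  show "u @ x # y # W @ v \<noteq> u @ x # W @ y # v"
  proof
    assume "u @ x # y # W @ v = u @ x # W @ y # v"
    then have "y # W = W @ [y]" by simp
    then have "last (y # W) = y" by (metis last_snoc)
    then show False using W hW by simp
  qed
  show "u @ x # y # W @ v \<noteq> u @ y # W @ x # v" using k2 by simp
  show "u @ W @ x # y # v \<noteq> u @ x # W @ y # v"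
  proof
    assume "u @ W @ x # y # v = u @ x # W @ y # v"
    then have e: "W @ x # y # v = x # W @ y # v" by simp
    have "hd (W @ x # y # v) = x" by (simp only: e list.sel(1))
    then show False using W hW by simp
  qed
  show "u @ W @ x # y # v \<noteq> u @ y # W @ x # v"
  proof
    assume "u @ W @ x # y # v = u @ y # W @ x # v"
    then show False using k2 by simp
  qed
  show "u @ x # y # W @ v \<noteq> u @ W @ x # y # v"
  proof
    assume "u @ x # y # W @ v = u @ W @ x # y # v"
    then have e: "W @ x # y # v = x # y # W @ v" by simp
    have "hd (W @ x # y # v) = x" by (simp only: e list.sel(1))
    then show False using W hW by simp
  qed
  show "\<not> sw (u @ x # y # W @ v) (u @ W @ x # y # v)"
  proof
    assume "sw (u @ x # y # W @ v) (u @ W @ x # y # v)"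
    then obtain i j where h: "i < length (u @ x # y # W @ v)" "j < length (u @ x # y # W @ v)" "i \<noteq> j"
      "(u @ W @ x # y # v) ! i < (u @ x # y # W @ v) ! i"
      "(u @ x # y # W @ v) ! i - (u @ W @ x # y # v) ! i = (u @ W @ x # y # v) ! j - (u @ x # y # W @ v) ! j"
      and eq: "\<forall>l<length (u @ x # y # W @ v). l \<noteq> i \<longrightarrow> l \<noteq> j \<longrightarrow> (u @ x # y # W @ v) ! l = (u @ W @ x # y # v) ! l"
      unfolding sw_def by blast
    let ?p = "length u" and ?q = "length u + length W + 1"
    have d1: "(u @ x # y # W @ v) ! ?p = x" "(u @ W @ x # y # v) ! ?p = hd W"
      using W by (auto simp: nth_append hd_conv_nth)
    have d2: "(u @ x # y # W @ v) ! ?q = last W" "(u @ W @ x # y # v) ! ?q = y"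
      using W by (auto simp: nth_append last_conv_nth nth_Cons')
    have bq: "?q < length (u @ x # y # W @ v)" by simp
    have bp: "?p < length (u @ x # y # W @ v)" by simp
    have "?p = i \<or> ?p = j"
    proof (rule ccontr)
      assume "\<not> (?p = i \<or> ?p = j)"
      then have "(u @ x # y # W @ v) ! ?p = (u @ W @ x # y # v) ! ?p" using eq bp by blast
      then show False using d1 hW by simp
    qed
    moreover have "?q = i \<or> ?q = j"
    proof (rule ccontr)
      assume "\<not> (?q = i \<or> ?q = j)"
      then have "(u @ x # y # W @ v) ! ?q = (u @ W @ x # y # v) ! ?q" using eq bq by blast
      then show False using d2 hW by simp
    qed
    moreover have "?p \<noteq> ?q" using W by simp
    ultimately have "(i = ?p \<and> j = ?q) \<or> (i = ?q \<and> j = ?p)" by auto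
    then show False using h(4,5) d1 d2 hW by auto
  qed
qed


lemma rep_comm: "Q @ [z] = z # Q \<Longrightarrow> Q = replicate (length Q) z"
proof (induction Q)
  case (Cons a Q)
  then have "a = z" by simp
  moreover have "Q @ [z] = z # Q" using Cons.prems \<open>a = z\<close> by simp
  ultimately show ?case using Cons.IH by simp
qed simp

lemma rep_comm': "z # Q = Q @ [z] \<Longrightarrow> Q = replicate (length Q) z"
  using rep_comm by metis

lemma hd_eq: "Q \<noteq> [] \<Longrightarrow> Q @ xs = z # ys \<Longrightarrow> hd Q = z"
  by (cases Q) auto

lemma pick4:
  assumes "a \<noteq> c" "b \<noteq> d" "\<not> (b = a \<and> d = c)" "\<not> (b = c \<and> d = a)"
  shows "\<exists>e\<in>{a, b, c, d}. e \<noteq> B \<and> e \<noteq> T"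
  using assms by auto

lemma choose4: "P a \<Longrightarrow> P b \<Longrightarrow> P c \<Longrightarrow> P d \<Longrightarrow> e \<in> {a, b, c, d} \<Longrightarrow> P e"
  by auto

lemma choose3: "P a \<Longrightarrow> P b \<Longrightarrow> P c \<Longrightarrow> e \<in> {a, b, c} \<Longrightarrow> P e"
  by auto

lemma sel34:
  assumes "P3 = A \<Longrightarrow> hq = x" "P3 = S \<Longrightarrow> hq = y" "P4 = A \<Longrightarrow> hq = x" "P4 = S \<Longrightarrow> hq = y"
    "P3 \<noteq> P4" "x \<noteq> y"
  shows "(P3 \<noteq> A \<and> P3 \<noteq> S) \<or> (P4 \<noteq> A \<and> P4 \<noteq> S)"
  using assms by auto

lemma cons_head: "u @ a # xs = u @ b # ys \<Longrightarrow> a = b"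
  by simp

lemma cons_head2: "u @ Q @ a # xs = u @ Q @ b # ys \<Longrightarrow> a = b"
  by simp

lemma mid_last: "u @ a # Q @ b # v = u @ Q @ c # d # v \<Longrightarrow> b = d"
proof -
  assume h: "u @ a # Q @ b # v = u @ Q @ c # d # v"
  then have "a # Q @ b # v = Q @ c # d # v" by (simp only: same_append_eq)
  then have e: "(a # Q @ b # v) ! (length Q + 1) = (Q @ c # d # v) ! (length Q + 1)" by (rule arg_cong)
  have l: "(a # Q @ b # v) ! (length Q + 1) = b" by (simp add: nth_append)
  have r: "(Q @ c # d # v) ! (length Q + 1) = d" by (simp add: nth_append)
  show "b = d" using e unfolding l r .
qed

lemma mid_first: "u @ a # Q @ b # v = u @ Q @ c # d # v \<Longrightarrow> a # Q = Q @ [c]"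
proof -
  assume h: "u @ a # Q @ b # v = u @ Q @ c # d # v"
  then have "a # Q @ b # v = Q @ c # d # v" by (simp only: same_append_eq)
  then have e: "take (length Q + 1) (a # Q @ b # v) = take (length Q + 1) (Q @ c # d # v)" by (rule arg_cong)
  have l: "take (length Q + 1) (a # Q @ b # v) = a # Q" by simp
  have r: "take (length Q + 1) (Q @ c # d # v) = Q @ [c]" by simp
  show ?thesis using e unfolding l r .
qed

lemma mid_comm: "u @ a # Q @ b # v = u @ a # b # Q @ v \<Longrightarrow> Q @ [b] = b # Q"
proof -
  assume h: "u @ a # Q @ b # v = u @ a # b # Q @ v"
  then have "Q @ b # v = b # Q @ v" by (simp only: same_append_eq list.inject)
  then have e: "take (length Q + 1) (Q @ b # v) = take (length Q + 1) (b # Q @ v)" by (rule arg_cong)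
  have l: "take (length Q + 1) (Q @ b # v) = Q @ [b]" by simp
  have r: "take (length Q + 1) (b # Q @ v) = b # Q" by simp
  show ?thesis using e unfolding l r .
qed

lemma hd_eq2: "Q \<noteq> [] \<Longrightarrow> u @ a # b # Q @ v = u @ Q @ c # d # w \<Longrightarrow> hd Q = a"
proof -
  assume Q: "Q \<noteq> []" and h: "u @ a # b # Q @ v = u @ Q @ c # d # w"
  then have "Q @ c # d # w = a # b # Q @ v" by (simp only: same_append_eq)
  then show "hd Q = a" by (rule hd_eq[OF Q])
qed

lemma sel34b:
  assumes "P3 = A \<Longrightarrow> hq = x" "P3 = S \<Longrightarrow> hq = x" "P4 = A \<Longrightarrow> hq = y" "P4 = S \<Longrightarrow> hq = y"
    "x \<noteq> y"
  shows "(P3 \<noteq> A \<and> P3 \<noteq> S) \<or> (P4 \<noteq> A \<and> P4 \<noteq> S)"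
  using assms by auto

lemma two_in: "(p = B \<or> p = T) \<and> (q = B \<or> q = T) \<Longrightarrow> p \<noteq> q \<Longrightarrow> (p = B \<and> q = T) \<or> (p = T \<and> q = B)"
  by auto

lemma pick3:
  assumes "E1 \<noteq> E2" "E1 \<noteq> E3" "E2 \<noteq> E3"
  shows "\<exists>E\<in>{E1, E2, E3}. E \<noteq> B \<and> E \<noteq> T"
  using assms by auto

lemma D_sep:
  fixes x y :: int
  assumes vA: "valid (u @ x # W @ y # v)" and vS: "valid (u @ y # W @ x # v)" and y: "y = x + 1"
    and W: "W \<noteq> []"
    and nAB: "\<not> sw (u @ x # W @ y # v) B" and nST: "\<not> sw (u @ y # W @ x # v) T"
  shows "\<exists>E. valid E \<and> mset E = mset (u @ x # W @ y # v) \<and> E \<noteq> u @ x # W @ y # v \<and>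
           E \<noteq> u @ y # W @ x # v \<and> E \<noteq> B \<and> E \<noteq> T"
proof -
  let ?A = "u @ x # W @ y # v" and ?S = "u @ y # W @ x # v"
  let ?E1 = "u @ x # y # W @ v" and ?E2 = "u @ W @ x # y # v"
  let ?E3 = "u @ y # x # W @ v" and ?E4 = "u @ W @ y # x # v"
  have fA: "ok u" "ok W" "ok v" "v = [] \<or> y \<le> hd v + 1" "last W \<le> y + 1" "x \<le> hd W + 1"
    "u = [] \<or> last u \<le> x + 1" "u = [] \<or> 0 \<le> hd u" "u = [] \<longrightarrow> 0 \<le> x"
    using vA W unfolding valid_def by (auto simp: ok_app ok_Cons hd_append split: if_splits)
  have fS: "y \<le> hd W + 1" "last W \<le> x + 1"
    using vS W unfolding valid_def by (auto simp: ok_app ok_Cons hd_append split: if_splits)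
  have v1: "valid ?E1" using fA fS W y unfolding valid_def by (auto simp: ok_app ok_Cons hd_append split: if_splits)
  have v2: "valid ?E2" using fA fS W y unfolding valid_def by (auto simp: ok_app ok_Cons hd_append split: if_splits)
  have v3: "valid ?E3" using fA fS W y unfolding valid_def by (auto simp: ok_app ok_Cons hd_append split: if_splits)
  have v4: "valid ?E4" using fA fS W y unfolding valid_def by (auto simp: ok_app ok_Cons hd_append split: if_splits)
  have m1: "mset ?E1 = mset ?A" by simp
  have m2: "mset ?E2 = mset ?A" by simp
  have m3: "mset ?E3 = mset ?A" by simp
  have m4: "mset ?E4 = mset ?A" by simp
  have xy: "x \<noteq> y" using y by simp
  show ?thesis
  proof (cases "W = replicate (length W) x")
    case True
    define r where "r = length W"
    have r: "r \<noteq> 0" using W unfolding r_def by simp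
    have Wr: "W = replicate r x" using True unfolding r_def .
    have eA: "?A = u @ (replicate (r + 1) x @ y # replicate 0 x) @ v"
      unfolding Wr by (simp add: replicate_append_same)
    have eS: "?S = u @ (replicate 0 x @ y # replicate (r + 1) x) @ v"
      unfolding Wr by (simp add: replicate_append_same)
    have eE: "?E1 = u @ (replicate 1 x @ y # replicate r x) @ v"
      unfolding Wr by simp
    have s1: "sw ?A ?E1" unfolding eA eE by (rule sw_form) (use r xy in auto)
    have s2: "sw ?S ?E1" unfolding eS eE by (rule sw_form) (use r xy in auto)
    have "?E1 \<noteq> B" using s1 nAB by auto
    moreover have "?E1 \<noteq> T" using s2 nST by auto
    moreover have "?E1 \<noteq> ?A" using s1 sw_irrefl by metis
    moreover have "?E1 \<noteq> ?S" using s2 sw_irrefl by metis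
    ultimately show ?thesis using v1 m1 by blast
  next
    case nx: False
    show ?thesis
    proof (cases "W = replicate (length W) y")
      case True
      define r where "r = length W"
      have r: "r \<noteq> 0" using W unfolding r_def by simp
      have Wr: "W = replicate r y" using True unfolding r_def .
      have eA: "?A = u @ (replicate 0 y @ x # replicate (r + 1) y) @ v"
        unfolding Wr by (simp add: replicate_append_same)
      have eS: "?S = u @ (replicate (r + 1) y @ x # replicate 0 y) @ v"
        unfolding Wr by (simp add: replicate_append_same)
      have eE: "?E2 = u @ (replicate r y @ x # replicate 1 y) @ v"
        unfolding Wr by simp
      have s1: "sw ?A ?E2" unfolding eA eE by (rule sw_form) (use r xy in auto)
      have s2: "sw ?S ?E2" unfolding eS eE by (rule sw_form) (use r xy in auto)
      have "?E2 \<noteq> B" using s1 nAB by auto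
      moreover have "?E2 \<noteq> T" using s2 nST by auto
      moreover have "?E2 \<noteq> ?A" using s1 sw_irrefl by metis
      moreover have "?E2 \<noteq> ?S" using s2 sw_irrefl by metis
      ultimately show ?thesis using v2 m2 by blast
    next
      case ny: False
      have d1A: "?E1 \<noteq> ?A"
      proof
        assume "?E1 = ?A"
        then have "y # W = W @ [y]" by simp
        from rep_comm'[OF this] ny show False by simp
      qed
      have d1S: "?E1 \<noteq> ?S" using xy by simp
      have d2A: "?E2 \<noteq> ?A"
      proof
        assume "?E2 = ?A"
        then have "W @ [x] = x # W" by simp
        from rep_comm[OF this] nx show False by simp
      qed
      have d2S: "?E2 \<noteq> ?S" using xy by simp
      have d3A: "?E3 \<noteq> ?A" using xy by simp
      have d3S: "?E3 \<noteq> ?S"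
      proof
        assume "?E3 = ?S"
        then have "x # W = W @ [x]" by simp
        from rep_comm'[OF this] nx show False by simp
      qed
      have d4A: "?E4 \<noteq> ?A" using xy by simp
      have d4S: "?E4 \<noteq> ?S"
      proof
        assume "?E4 = ?S"
        then have "W @ [y] = y # W" by simp
        from rep_comm[OF this] ny show False by simp
      qed
      have d13: "?E1 \<noteq> ?E3" using xy by simp
      have d24: "?E2 \<noteq> ?E4" using xy by simp
      have n1: "\<not> (?E2 = ?E1 \<and> ?E4 = ?E3)"
      proof
        assume h: "?E2 = ?E1 \<and> ?E4 = ?E3"
        have h1: "?E2 = ?E1" using h by (rule conjunct1)
        have h2: "?E4 = ?E3" using h by (rule conjunct2)
        have "W @ x # y # v = x # y # W @ v" using h1 by simp
        then have "hd W = x" by (rule hd_eq[OF W])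
        moreover have "W @ y # x # v = y # x # W @ v" using h2 by simp
        then have "hd W = y" by (rule hd_eq[OF W])
        ultimately show False using xy by simp
      qed
      have n2: "\<not> (?E2 = ?E3 \<and> ?E4 = ?E1)"
      proof
        assume h: "?E2 = ?E3 \<and> ?E4 = ?E1"
        have h1: "?E2 = ?E3" using h by (rule conjunct1)
        have h2: "?E4 = ?E1" using h by (rule conjunct2)
        have "W @ x # y # v = y # x # W @ v" using h1 by simp
        then have "hd W = y" by (rule hd_eq[OF W])
        moreover have "W @ y # x # v = x # y # W @ v" using h2 by simp
        then have "hd W = x" by (rule hd_eq[OF W])
        ultimately show False using xy by simp
      qed
      have "\<exists>E\<in>{?E1, ?E2, ?E3, ?E4}. E \<noteq> B \<and> E \<noteq> T"
        by (rule pick4[OF d13 d24 n1 n2])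
      then obtain E where E: "E \<in> {?E1, ?E2, ?E3, ?E4}" "E \<noteq> B" "E \<noteq> T" by blast
      have "valid E \<and> mset E = mset ?A \<and> E \<noteq> ?A \<and> E \<noteq> ?S"
        by (rule choose4[where P = "\<lambda>E. valid E \<and> mset E = mset ?A \<and> E \<noteq> ?A \<and> E \<noteq> ?S", OF _ _ _ _ E(1)])
          (intro conjI v1 m1 d1A d1S, intro conjI v2 m2 d2A d2S, intro conjI v3 m3 d3A d3S, intro conjI v4 m4 d4A d4S)
      then show ?thesis using E by blast
    qed
  qed
qed

lemma D_adjQ:
  fixes x y :: int
  assumes vA: "valid (u @ x # y # Q @ v)" and y: "y = x + 1" and Q: "Q \<noteq> []"
    and cQ: "last Q \<le> x + 1" and cv: "v = [] \<or> x \<le> hd v"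
    and nAB: "\<not> sw (u @ x # y # Q @ v) B" and nST: "\<not> sw (u @ y # x # Q @ v) T"
  shows "\<exists>E. valid E \<and> mset E = mset (u @ x # y # Q @ v) \<and> E \<noteq> u @ x # y # Q @ v \<and>
           E \<noteq> u @ y # x # Q @ v \<and> E \<noteq> B \<and> E \<noteq> T"
proof -
  let ?A = "u @ x # y # Q @ v" and ?S = "u @ y # x # Q @ v"
  let ?P1 = "u @ x # Q @ y # v" and ?P2 = "u @ y # Q @ x # v"
  let ?P3 = "u @ Q @ x # y # v" and ?P4 = "u @ Q @ y # x # v"

  have fA: "ok u" "ok Q" "ok v"
    "u = [] \<or> last u \<le> x + 1" "u = [] \<or> 0 \<le> hd u"
    using vA Q unfolding valid_def by (auto simp: ok_app ok_Cons hd_append split: if_splits)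
  have fA2: "y \<le> hd Q + 1" "u = [] \<longrightarrow> 0 \<le> x"
    using vA Q unfolding valid_def by (auto simp: ok_app ok_Cons hd_append split: if_splits)
  have xy: "x \<noteq> y" using y by simp
  have v1: "valid ?P1" using fA fA2 Q y cQ cv unfolding valid_def by (auto simp: ok_app ok_Cons hd_append split: if_splits)
  have v2: "valid ?P2" using fA fA2 Q y cQ cv unfolding valid_def by (auto simp: ok_app ok_Cons hd_append split: if_splits)
  have v3: "valid ?P3" using fA fA2 Q y cQ cv unfolding valid_def by (auto simp: ok_app ok_Cons hd_append split: if_splits)
  have v4: "valid ?P4" using fA fA2 Q y cQ cv unfolding valid_def by (auto simp: ok_app ok_Cons hd_append split: if_splits)
  have m1: "mset ?P1 = mset ?A" by simp
  have m2: "mset ?P2 = mset ?A" by simp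
  have m3: "mset ?P3 = mset ?A" by simp
  have m4: "mset ?P4 = mset ?A" by simp
  show ?thesis
  proof (cases "Q = replicate (length Q) x")
    case True
    define r where "r = length Q"
    have r: "r \<noteq> 0" using Q unfolding r_def by simp
    have Qr: "Q = replicate r x" using True unfolding r_def .
    have eA: "?A = u @ (replicate 1 x @ y # replicate r x) @ v" unfolding Qr by simp
    have eS: "?S = u @ (replicate 0 x @ y # replicate (r + 1) x) @ v" unfolding Qr by simp
    have eE: "?P1 = u @ (replicate (r + 1) x @ y # replicate 0 x) @ v"
      unfolding Qr by (simp add: replicate_append_same)
    have s1: "sw ?A ?P1" unfolding eA eE by (rule sw_form) (use r xy in auto)
    have s2: "sw ?S ?P1" unfolding eS eE by (rule sw_form) (use r xy in auto)
    have "?P1 \<noteq> B" using s1 nAB by auto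
    moreover have "?P1 \<noteq> T" using s2 nST by auto
    moreover have "?P1 \<noteq> ?A" using s1 sw_irrefl by metis
    moreover have "?P1 \<noteq> ?S" using s2 sw_irrefl by metis
    ultimately show ?thesis using v1 m1 by blast
  next
    case nx: False
    show ?thesis
    proof (cases "Q = replicate (length Q) y")
      case True
      define r where "r = length Q"
      have r: "r \<noteq> 0" using Q unfolding r_def by simp
      have Qr: "Q = replicate r y" using True unfolding r_def .
      have eA: "?A = u @ (replicate 0 y @ x # replicate (r + 1) y) @ v" unfolding Qr by simp
      have eS: "?S = u @ (replicate 1 y @ x # replicate r y) @ v" unfolding Qr by simp
      have eE: "?P2 = u @ (replicate (r + 1) y @ x # replicate 0 y) @ v"
        unfolding Qr by (simp add: replicate_append_same)
      have s1: "sw ?A ?P2" unfolding eA eE by (rule sw_form) (use r xy in auto)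
      have s2: "sw ?S ?P2" unfolding eS eE by (rule sw_form) (use r xy in auto)
      have "?P2 \<noteq> B" using s1 nAB by auto
      moreover have "?P2 \<noteq> T" using s2 nST by auto
      moreover have "?P2 \<noteq> ?A" using s1 sw_irrefl by metis
      moreover have "?P2 \<noteq> ?S" using s2 sw_irrefl by metis
      ultimately show ?thesis using v2 m2 by blast
    next
      case ny: False
  have d1A: "?P1 \<noteq> ?A"
  proof
    assume "?P1 = ?A"
    then have "y # Q = Q @ [y]" by simp
    from rep_comm'[OF this] ny show False by simp
  qed
  have d1S: "?P1 \<noteq> ?S"
  proof
    assume h: "?P1 = ?S"
    have "x = y \<or> y = x" using cons_head[OF h] by simp
    then show False using xy by auto
  qed
  have d2A: "?P2 \<noteq> ?A"
  proof
    assume h: "?P2 = ?A"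
    have "x = y \<or> y = x" using cons_head[OF h] by simp
    then show False using xy by auto
  qed
  have d2S: "?P2 \<noteq> ?S"
  proof
    assume "?P2 = ?S"
    then have "x # Q = Q @ [x]" by simp
    from rep_comm'[OF this] nx show False by simp
  qed
  have h3A: "?P3 = ?A \<Longrightarrow> hd Q = x"
  proof -
    assume "?P3 = ?A"
    then have "Q @ x # y # v = x # y # Q @ v" by simp
    then show "hd Q = x" by (rule hd_eq[OF Q])
  qed
  have h3S: "?P3 = ?S \<Longrightarrow> hd Q = y"
  proof -
    assume "?P3 = ?S"
    then have "Q @ x # y # v = y # x # Q @ v" by simp
    then show "hd Q = y" by (rule hd_eq[OF Q])
  qed
  have h4A: "?P4 = ?A \<Longrightarrow> hd Q = x"
  proof -
    assume "?P4 = ?A"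
    then have "Q @ y # x # v = x # y # Q @ v" by simp
    then show "hd Q = x" by (rule hd_eq[OF Q])
  qed
  have h4S: "?P4 = ?S \<Longrightarrow> hd Q = y"
  proof -
    assume "?P4 = ?S"
    then have "Q @ y # x # v = y # x # Q @ v" by simp
    then show "hd Q = y" by (rule hd_eq[OF Q])
  qed
  have d34: "?P3 \<noteq> ?P4"
  proof
    assume h: "?P3 = ?P4"
    have "x = y \<or> y = x" using cons_head2[OF h] by simp
    then show False using xy by auto
  qed
  have d12: "?P1 \<noteq> ?P2"
  proof
    assume h: "?P1 = ?P2"
    have "x = y \<or> y = x" using cons_head[OF h] by simp
    then show False using xy by auto
  qed
  have d13: "?P1 \<noteq> ?P3"
  proof
    assume "?P1 = ?P3"
    then have "x # Q = Q @ [x]" by simp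
    from rep_comm'[OF this] nx show False by simp
  qed
  have d14: "?P1 \<noteq> ?P4"
  proof
    assume h: "?P1 = ?P4"
    have "x = y \<or> y = x" using mid_last[OF h] by simp
    then show False using xy by auto
  qed
  have d23: "?P2 \<noteq> ?P3"
  proof
    assume h: "?P2 = ?P3"
    have "x = y \<or> y = x" using mid_last[OF h] by simp
    then show False using xy by auto
  qed
  have d24: "?P2 \<noteq> ?P4"
  proof
    assume "?P2 = ?P4"
    then have "y # Q = Q @ [y]" by simp
    from rep_comm'[OF this] ny show False by simp
  qed

      have G: "\<exists>G. valid G \<and> mset G = mset ?A \<and> G \<noteq> ?A \<and> G \<noteq> ?S \<and> G \<noteq> ?P1 \<and> G \<noteq> ?P2"
      proof -
        have "(?P3 \<noteq> ?A \<and> ?P3 \<noteq> ?S) \<or> (?P4 \<noteq> ?A \<and> ?P4 \<noteq> ?S)"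
          by (rule sel34[OF h3A h3S h4A h4S d34 xy])
        then show ?thesis
        proof
          assume h: "?P3 \<noteq> ?A \<and> ?P3 \<noteq> ?S"
          show ?thesis by (rule exI[of _ ?P3]) (intro conjI v3 m3 d13[symmetric] d23[symmetric] conjunct1[OF h] conjunct2[OF h])
        next
          assume h: "?P4 \<noteq> ?A \<and> ?P4 \<noteq> ?S"
          show ?thesis by (rule exI[of _ ?P4]) (intro conjI v4 m4 d14[symmetric] d24[symmetric] conjunct1[OF h] conjunct2[OF h])
        qed
      qed
      then obtain G where G: "valid G" "mset G = mset ?A" "G \<noteq> ?A" "G \<noteq> ?S" "G \<noteq> ?P1" "G \<noteq> ?P2"
        by blast
      have "\<exists>E\<in>{?P1, ?P2, G}. E \<noteq> B \<and> E \<noteq> T"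
        by (rule pick3) (use d12 G in auto)
      then obtain E where E: "E \<in> {?P1, ?P2, G}" "E \<noteq> B" "E \<noteq> T" by blast
      have "valid E \<and> mset E = mset ?A \<and> E \<noteq> ?A \<and> E \<noteq> ?S"
        by (rule choose3[where P = "\<lambda>E. valid E \<and> mset E = mset ?A \<and> E \<noteq> ?A \<and> E \<noteq> ?S", OF _ _ _ E(1)])
          (intro conjI v1 m1 d1A d1S, intro conjI v2 m2 d2A d2S, intro conjI G(1-4))
      then show ?thesis using E by blast
    qed
  qed
qed

lemma D_Qadj:
  fixes x y :: int
  assumes vA: "valid (u @ Q @ x # y # v)" and y: "y = x + 1" and Q: "Q \<noteq> []"
    and cu1: "u = [] \<longrightarrow> 0 \<le> x" and cu2: "u = [] \<or> last u \<le> x + 1" and cQ: "x \<le> hd Q"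
    and nAB: "\<not> sw (u @ Q @ x # y # v) B" and nST: "\<not> sw (u @ Q @ y # x # v) T"
  shows "\<exists>E. valid E \<and> mset E = mset (u @ Q @ x # y # v) \<and> E \<noteq> u @ Q @ x # y # v \<and>
           E \<noteq> u @ Q @ y # x # v \<and> E \<noteq> B \<and> E \<noteq> T"
proof -
  let ?A = "u @ Q @ x # y # v" and ?S = "u @ Q @ y # x # v"
  let ?P1 = "u @ x # Q @ y # v" and ?P2 = "u @ y # Q @ x # v"
  let ?P3 = "u @ x # y # Q @ v" and ?P4 = "u @ y # x # Q @ v"
  have fA: "ok u" "ok Q" "ok v" "last Q \<le> x + 1" "v = [] \<or> y \<le> hd v + 1" "u = [] \<or> 0 \<le> hd u"
    using vA Q unfolding valid_def by (auto simp: ok_app ok_Cons hd_append split: if_splits)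
  have xy: "x \<noteq> y" using y by simp
  have v1: "valid ?P1" using fA cu1 cu2 cQ Q y unfolding valid_def by (auto simp: ok_app ok_Cons hd_append split: if_splits)
  have v2: "valid ?P2" using fA cu1 cu2 cQ Q y unfolding valid_def by (auto simp: ok_app ok_Cons hd_append split: if_splits)
  have v3: "valid ?P3" using fA cu1 cu2 cQ Q y unfolding valid_def by (auto simp: ok_app ok_Cons hd_append split: if_splits)
  have v4: "valid ?P4" using fA cu1 cu2 cQ Q y unfolding valid_def by (auto simp: ok_app ok_Cons hd_append split: if_splits)
  have m1: "mset ?P1 = mset ?A" by simp
  have m2: "mset ?P2 = mset ?A" by simp
  have m3: "mset ?P3 = mset ?A" by simp
  have m4: "mset ?P4 = mset ?A" by simp
  show ?thesis
  proof (cases "Q = replicate (length Q) x")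
    case True
    define r where "r = length Q"
    have r: "r \<noteq> 0" using Q unfolding r_def by simp
    have Qr: "Q = replicate r x" using True unfolding r_def .
    have eA: "?A = u @ (replicate (r + 1) x @ y # replicate 0 x) @ v"
      unfolding Qr by (simp add: replicate_append_same)
    have eS: "?S = u @ (replicate r x @ y # replicate 1 x) @ v" unfolding Qr by simp
    have eE: "?P2 = u @ (replicate 0 x @ y # replicate (r + 1) x) @ v"
      unfolding Qr by (simp add: replicate_append_same)
    have s1: "sw ?A ?P2" unfolding eA eE by (rule sw_form) (use r xy in auto)
    have s2: "sw ?S ?P2" unfolding eS eE by (rule sw_form) (use r xy in auto)
    have "?P2 \<noteq> B" using s1 nAB by auto
    moreover have "?P2 \<noteq> T" using s2 nST by auto
    moreover have "?P2 \<noteq> ?A" using s1 sw_irrefl by metis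
    moreover have "?P2 \<noteq> ?S" using s2 sw_irrefl by metis
    ultimately show ?thesis using v2 m2 by blast
  next
    case nx: False
    show ?thesis
    proof (cases "Q = replicate (length Q) y")
      case True
      define r where "r = length Q"
      have r: "r \<noteq> 0" using Q unfolding r_def by simp
      have Qr: "Q = replicate r y" using True unfolding r_def .
      have eA: "?A = u @ (replicate r y @ x # replicate 1 y) @ v" unfolding Qr by simp
      have eS: "?S = u @ (replicate (r + 1) y @ x # replicate 0 y) @ v"
        unfolding Qr by (simp add: replicate_append_same)
      have eE: "?P1 = u @ (replicate 0 y @ x # replicate (r + 1) y) @ v"
        unfolding Qr by (simp add: replicate_append_same)
      have s1: "sw ?A ?P1" unfolding eA eE by (rule sw_form) (use r xy in auto)
      have s2: "sw ?S ?P1" unfolding eS eE by (rule sw_form) (use r xy in auto)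
      have "?P1 \<noteq> B" using s1 nAB by auto
      moreover have "?P1 \<noteq> T" using s2 nST by auto
      moreover have "?P1 \<noteq> ?A" using s1 sw_irrefl by metis
      moreover have "?P1 \<noteq> ?S" using s2 sw_irrefl by metis
      ultimately show ?thesis using v1 m1 by blast
    next
      case ny: False
  have d1A: "?P1 \<noteq> ?A"
  proof
    assume h: "?P1 = ?A"
    from rep_comm'[OF mid_first[OF h]] nx show False by simp
  qed
  have d1S: "?P1 \<noteq> ?S"
  proof
    assume h: "?P1 = ?S"
    have "x = y \<or> y = x" using mid_last[OF h] by simp
    then show False using xy by auto
  qed
  have d2A: "?P2 \<noteq> ?A"
  proof
    assume h: "?P2 = ?A"
    have "x = y \<or> y = x" using mid_last[OF h] by simp
    then show False using xy by auto
  qed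
  have d2S: "?P2 \<noteq> ?S"
  proof
    assume h: "?P2 = ?S"
    from rep_comm'[OF mid_first[OF h]] ny show False by simp
  qed
  have h3A: "?P3 = ?A \<Longrightarrow> hd Q = x"
    by (rule hd_eq2[OF Q])
  have h3S: "?P3 = ?S \<Longrightarrow> hd Q = x"
    by (rule hd_eq2[OF Q])
  have h4A: "?P4 = ?A \<Longrightarrow> hd Q = y"
    by (rule hd_eq2[OF Q])
  have h4S: "?P4 = ?S \<Longrightarrow> hd Q = y"
    by (rule hd_eq2[OF Q])
  have d12: "?P1 \<noteq> ?P2"
  proof
    assume h: "?P1 = ?P2"
    have "x = y \<or> y = x" using cons_head[OF h] by simp
    then show False using xy by auto
  qed
  have d13: "?P1 \<noteq> ?P3"
  proof
    assume h: "?P1 = ?P3"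
    from rep_comm[OF mid_comm[OF h]] ny show False by simp
  qed
  have d14: "?P1 \<noteq> ?P4"
  proof
    assume h: "?P1 = ?P4"
    have "x = y \<or> y = x" using cons_head[OF h] by simp
    then show False using xy by auto
  qed
  have d23: "?P2 \<noteq> ?P3"
  proof
    assume h: "?P2 = ?P3"
    have "x = y \<or> y = x" using cons_head[OF h] by simp
    then show False using xy by auto
  qed
  have d24: "?P2 \<noteq> ?P4"
  proof
    assume h: "?P2 = ?P4"
    from rep_comm[OF mid_comm[OF h]] nx show False by simp
  qed

      have G: "\<exists>G. valid G \<and> mset G = mset ?A \<and> G \<noteq> ?A \<and> G \<noteq> ?S \<and> G \<noteq> ?P1 \<and> G \<noteq> ?P2"
      proof -
        have "(?P3 \<noteq> ?A \<and> ?P3 \<noteq> ?S) \<or> (?P4 \<noteq> ?A \<and> ?P4 \<noteq> ?S)"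
          by (rule sel34b[OF h3A h3S h4A h4S xy])
        then show ?thesis
        proof
          assume h: "?P3 \<noteq> ?A \<and> ?P3 \<noteq> ?S"
          show ?thesis by (rule exI[of _ ?P3]) (intro conjI v3 m3 d13[symmetric] d23[symmetric] conjunct1[OF h] conjunct2[OF h])
        next
          assume h: "?P4 \<noteq> ?A \<and> ?P4 \<noteq> ?S"
          show ?thesis by (rule exI[of _ ?P4]) (intro conjI v4 m4 d14[symmetric] d24[symmetric] conjunct1[OF h] conjunct2[OF h])
        qed
      qed
      then obtain G where G: "valid G" "mset G = mset ?A" "G \<noteq> ?A" "G \<noteq> ?S" "G \<noteq> ?P1" "G \<noteq> ?P2"
        by blast
      have "\<exists>E\<in>{?P1, ?P2, G}. E \<noteq> B \<and> E \<noteq> T"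
        by (rule pick3) (use d12 G in auto)
      then obtain E where E: "E \<in> {?P1, ?P2, G}" "E \<noteq> B" "E \<noteq> T" by blast
      have "valid E \<and> mset E = mset ?A \<and> E \<noteq> ?A \<and> E \<noteq> ?S"
        by (rule choose3[where P = "\<lambda>E. valid E \<and> mset E = mset ?A \<and> E \<noteq> ?A \<and> E \<noteq> ?S", OF _ _ _ E(1)])
          (intro conjI v1 m1 d1A d1S, intro conjI v2 m2 d2A d2S, intro conjI G(1-4))
      then show ?thesis using E by blast
    qed
  qed
qed


definition cut :: "int list \<Rightarrow> int \<Rightarrow> nat \<Rightarrow> bool" where
  "cut A x g \<longleftrightarrow> g \<le> length A \<and> (if g = 0 then 0 \<le> x else A ! (g - 1) \<le> x + 1) \<and>
     (g < length A \<longrightarrow> x \<le> A ! g)"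

lemma cut_after:
  assumes vA: "valid A" and t: "t < length A" "A ! t \<le> x"
  shows "\<exists>g. t < g \<and> cut A x g"
proof -
  have "\<forall>t. length A - t = d \<longrightarrow> t < length A \<longrightarrow> A ! t \<le> x \<longrightarrow> (\<exists>g. t < g \<and> cut A x g)" for d
  proof (induction d)
    case 0 then show ?case by simp
  next
    case (Suc d)
    show ?case
    proof (intro allI impI)
      fix t assume d: "length A - t = Suc d" and t: "t < length A" and At: "A ! t \<le> x"
      show "\<exists>g. t < g \<and> cut A x g"
      proof (cases "Suc t = length A")
        case True
        have "A ! (Suc t - 1) \<le> x + 1" using At by simp
        moreover have "A \<noteq> []" using t by auto
        ultimately have "cut A x (Suc t)" unfolding cut_def using True by (simp del: diff_Suc_1)
        then show ?thesis by blast
      next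
        case False
        then have t1: "Suc t < length A" using t by simp
        show ?thesis
        proof (cases "x \<le> A ! Suc t")
          case True
          then have "cut A x (Suc t)" unfolding cut_def using At t1 by simp
          then show ?thesis by blast
        next
          case False
          then have "A ! Suc t \<le> x" by simp
          moreover have "length A - Suc t = d" using d by simp
          ultimately obtain g where "Suc t < g" "cut A x g" using Suc.IH t1 by blast
          then show ?thesis by (intro exI[of _ g]) simp
        qed
      qed
    qed
  qed
  then show ?thesis using t by blast
qed

lemma Gmin:
  assumes vA: "valid A" and x: "x < 0" and i: "Suc i < length A" "A ! i = x" "A ! Suc i = x + 1"
    and nc: "\<forall>g. cut A x g \<longrightarrow> g = i \<or> g = Suc i \<or> g = Suc (Suc i)"
  shows "\<forall>l<length A. l \<noteq> i \<longrightarrow> x < A ! l"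
proof -
  have V0: "A \<noteq> [] \<Longrightarrow> 0 \<le> A ! 0" and V: "\<And>l. Suc l < length A \<Longrightarrow> A ! l \<le> A ! Suc l + 1"
    using vA unfolding valid_nth by auto
  have before: "\<forall>l. l < i \<longrightarrow> x + 1 \<le> A ! l"
  proof (intro allI)
    fix l show "l < i \<longrightarrow> x + 1 \<le> A ! l"
    proof (induction l)
      case 0
      show ?case
      proof
        assume "0 < i"
        have "A \<noteq> []" using i by auto
        then have "0 \<le> A ! 0" by (rule V0)
        then show "x + 1 \<le> A ! 0" using x by simp
      qed
    next
      case (Suc l)
      show ?case
      proof
        assume l: "Suc l < i"
        then have "x + 1 \<le> A ! l" using Suc.IH by simp
        moreover have "A ! l \<le> A ! Suc l + 1" using V l i by simp
        ultimately have ge: "x \<le> A ! Suc l" by simp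
        show "x + 1 \<le> A ! Suc l"
        proof (rule ccontr)
          assume "\<not> x + 1 \<le> A ! Suc l"
          then have eqx: "A ! Suc l = x" using ge by simp
          have "cut A x (Suc l)" unfolding cut_def using eqx l i V[of l] by simp
          then show False using nc l by auto
        qed
      qed
    qed
  qed
  show ?thesis
  proof (intro allI impI)
    fix l assume l: "l < length A" and li: "l \<noteq> i"
    show "x < A ! l"
    proof (rule ccontr)
      assume "\<not> x < A ! l"
      then have Al: "A ! l \<le> x" by simp
      show False
      proof (cases "l < i")
        case True then show False using before Al by force
      next
        case False
        then have "i < l" using li by simp
        show False
        proof (cases "l = Suc i")
          case True then show False using Al i by simp
        next
          case False
          then have "Suc (Suc i) \<le> l" using \<open>i < l\<close> by simp
          obtain g where "l < g" "cut A x g" using cut_after[OF vA l Al] by blast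
          then show False using nc \<open>Suc (Suc i) \<le> l\<close> by fastforce
        qed
      qed
    qed
  qed
qed


lemma NB:
  assumes vA: "valid A" and vS: "valid S" and sAS: "sw A S" and eqR: "\<And>k. Rr A k = Rr S k"
    and ph: "phi S \<le> phi A" and nAB: "\<not> sw A B" and nST: "\<not> sw S T" and sBT: "sw B T"
    and neg: "\<forall>l<length A. A ! l \<noteq> S ! l \<longrightarrow> A ! l < 0"
  shows "(\<exists>E. valid E \<and> mset E = mset A \<and> E \<noteq> A \<and> E \<noteq> S \<and> E \<noteq> B \<and> E \<noteq> T) \<or>
         (\<exists>i. Suc i < length A \<and> S = A[i := A ! Suc i, Suc i := A ! i] \<and> (\<forall>l<length A. l \<noteq> i \<longrightarrow> A ! i < A ! l))"
proof -
  obtain u W v a b where A: "A = u @ a # W @ b # v" and S: "S = u @ b # W @ a # v" and ab: "a \<noteq> b"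
    using nec[OF sAS eqR] by blast
  have "phi S - phi A = (1 + int (length W)) * (a - b)" unfolding A S by (rule phi_swap)
  then have "(1 + int (length W)) * (a - b) \<le> 0" using ph by simp
  then have "a \<le> b" by (simp add: mult_le_0_iff)
  then have ab': "a < b" using ab by simp
  show ?thesis
  proof (cases "a + 2 \<le> b")
    case True
    note k = D_k2[OF vA[unfolded A] vS[unfolded S] True]
    let ?E1 = "u @ a # b # W @ v" and ?E2 = "u @ W @ a # b # v"
    have m1: "mset ?E1 = mset A" unfolding A by simp
    have m2: "mset ?E2 = mset A" unfolding A by simp
    have "\<exists>E\<in>{?E1, ?E2}. E \<noteq> B \<and> E \<noteq> T"
    proof (rule ccontr)
      assume "\<not> (\<exists>E\<in>{?E1, ?E2}. E \<noteq> B \<and> E \<noteq> T)"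
      then have "(?E1 = B \<or> ?E1 = T) \<and> (?E2 = B \<or> ?E2 = T)" by blast
      then have "(?E1 = B \<and> ?E2 = T) \<or> (?E1 = T \<and> ?E2 = B)" using k(7) by (rule two_in)
      then have "sw ?E1 ?E2 \<or> sw ?E2 ?E1" using sBT by blast
      then show False using k(8) sw_sym by blast
    qed
    then obtain E where E: "E \<in> {?E1, ?E2}" "E \<noteq> B" "E \<noteq> T" by blast
    have "valid E \<and> mset E = mset A \<and> E \<noteq> A \<and> E \<noteq> S"
    proof -
      from E(1) have "E = ?E1 \<or> E = ?E2" by simp
      then show ?thesis
      proof
        assume "E = ?E1" then show ?thesis unfolding A S using k(1,3,4) m1[unfolded A] by simp
      next
        assume "E = ?E2" then show ?thesis unfolding A S using k(2,5,6) m2[unfolded A] by simp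
      qed
    qed
    then show ?thesis using E by blast
  next
    case False
    then have b: "b = a + 1" using ab' by simp
    show ?thesis
    proof (cases "W = []")
      case False
      have "\<exists>E. valid E \<and> mset E = mset A \<and> E \<noteq> A \<and> E \<noteq> S \<and> E \<noteq> B \<and> E \<noteq> T"
        using D_sep[OF vA[unfolded A] vS[unfolded S] b False nAB[unfolded A] nST[unfolded S]]
        unfolding A S by blast
      then show ?thesis by blast
    next
      case W0: True
      let ?i = "length u"
      have A': "A = u @ a # b # v" using A W0 by simp
      have S': "S = u @ b # a # v" using S W0 by simp
      have lenA: "length A = ?i + 2 + length v" unfolding A' by simp
      have Ai: "A ! ?i = a" unfolding A' by simp
      have Ai1: "A ! Suc ?i = b" unfolding A' by (simp add: nth_append)
      have Si: "S ! ?i = b" unfolding S' by simp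
      have aneg: "a < 0" using neg[rule_format, of ?i] Ai Si ab lenA by simp
      show ?thesis
      proof (cases "\<exists>g. cut A a g \<and> g \<noteq> ?i \<and> g \<noteq> Suc ?i \<and> g \<noteq> Suc (Suc ?i)")
        case True
        then obtain g where g: "cut A a g" "g \<noteq> ?i" "g \<noteq> Suc ?i" "g \<noteq> Suc (Suc ?i)" by blast
        have gN: "g \<le> length A" using g(1) unfolding cut_def by simp
        show ?thesis
        proof (cases "?i < g")
          case True
          define k where "k = g - (?i + 2)"
          have k0: "0 < k" "k \<le> length v" using True g gN lenA unfolding k_def by auto
          have gk: "g = ?i + 2 + k" using True g unfolding k_def by auto
          define Q where "Q = take k v"
          define v' where "v' = drop k v"
          have Q: "Q \<noteq> []" unfolding Q_def using k0 by auto
          have vQ: "v = Q @ v'" unfolding Q_def v'_def by simp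
          have lQ: "last Q = A ! (g - 1)"
          proof -
            have "last Q = Q ! (length Q - 1)" using Q by (rule last_conv_nth)
            also have "\<dots> = Q ! (k - 1)" unfolding Q_def using k0 by simp
            finally have "last Q = Q ! (k - 1)" .
            also have "\<dots> = v ! (k - 1)" unfolding Q_def using k0 by simp
            also have "\<dots> = A ! (g - 1)" unfolding A' gk using k0 by (simp add: nth_append)
            finally show ?thesis .
          qed
          have cQ: "last Q \<le> a + 1" using g(1) lQ gk unfolding cut_def by simp
          have cv: "v' = [] \<or> a \<le> hd v'"
          proof (cases "v' = []")
            case False
            then have "k < length v" unfolding v'_def by simp
            then have "g < length A" using gk lenA by simp
            then have "a \<le> A ! g" using g(1) unfolding cut_def by simp
            moreover have "A ! g = hd v'" unfolding A' gk v'_def using \<open>k < length v\<close>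
              by (simp add: nth_append hd_drop_conv_nth)
            ultimately show ?thesis by simp
          qed simp
          have A2: "A = u @ a # (a + 1) # Q @ v'" unfolding A' vQ b by simp
          have S2: "S = u @ (a + 1) # a # Q @ v'" unfolding S' vQ b by simp
          have "\<exists>E. valid E \<and> mset E = mset A \<and> E \<noteq> A \<and> E \<noteq> S \<and> E \<noteq> B \<and> E \<noteq> T"
            using D_adjQ[OF vA[unfolded A2] refl Q cQ cv nAB[unfolded A2] nST[unfolded S2]]
            unfolding A2 S2 by blast
          then show ?thesis by blast
        next
          case False
          then have gi: "g < ?i" using g(2) by simp
          define u' where "u' = take g u"
          define Q where "Q = drop g u"
          have Q: "Q \<noteq> []" unfolding Q_def using gi by simp
          have uQ: "u = u' @ Q" unfolding Q_def u'_def by simp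
          have c1: "u' = [] \<longrightarrow> 0 \<le> a"
          proof
            assume "u' = []"
            then have "g = 0" unfolding u'_def using gi by auto
            then show "0 \<le> a" using g(1) unfolding cut_def by simp
          qed
          have c2: "u' = [] \<or> last u' \<le> a + 1"
          proof (cases "u' = []")
            case False
            then have g0: "g \<noteq> 0" unfolding u'_def by auto
            have "last u' = u' ! (length u' - 1)" using False by (rule last_conv_nth)
            also have "\<dots> = u ! (g - 1)" unfolding u'_def using g0 gi by simp
            finally have "last u' = u ! (g - 1)" .
            also have "\<dots> = A ! (g - 1)"
            proof -
              have "g - 1 < length u" using gi by simp
              then show ?thesis unfolding A' by (simp add: nth_append)
            qed
            finally have "last u' = A ! (g - 1)" .
            then show ?thesis using g(1) g0 unfolding cut_def by simp
          qed simp
          have c3: "a \<le> hd Q"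
          proof -
            have "hd Q = u ! g" unfolding Q_def using gi by (simp add: hd_drop_conv_nth)
            also have "\<dots> = A ! g" unfolding A' using gi by (simp add: nth_append)
            finally show ?thesis using g(1) gi lenA unfolding cut_def by simp
          qed
          have A2: "A = u' @ Q @ a # (a + 1) # v" unfolding A' uQ b by simp
          have S2: "S = u' @ Q @ (a + 1) # a # v" unfolding S' uQ b by simp
          have "\<exists>E. valid E \<and> mset E = mset A \<and> E \<noteq> A \<and> E \<noteq> S \<and> E \<noteq> B \<and> E \<noteq> T"
            using D_Qadj[OF vA[unfolded A2] refl Q c1 c2 c3 nAB[unfolded A2] nST[unfolded S2]]
            unfolding A2 S2 by blast
          then show ?thesis by blast
        qed
      next
        case False
        then have nc: "\<forall>g. cut A a g \<longrightarrow> g = ?i \<or> g = Suc ?i \<or> g = Suc (Suc ?i)" by blast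
        have i1: "Suc ?i < length A" using lenA by simp
        have mn: "\<forall>l<length A. l \<noteq> ?i \<longrightarrow> a < A ! l"
          by (rule Gmin[OF vA aneg i1 Ai Ai1[unfolded b] nc])
        have "S = A[?i := A ! Suc ?i, Suc ?i := A ! ?i]"
          unfolding Ai Ai1 unfolding A' S' by (simp add: list_update_append)
        then show ?thesis using i1 mn Ai by auto
      qed
    qed
  qed
qed


lemma CORE:
  assumes vA: "valid A" and vS: "valid S" and vT: "valid T"
    and sAS: "sw A S" and sAT: "sw A T" and sBS: "sw B S" and sBT: "sw B T"
    and nAB: "\<not> sw A B" and nST: "\<not> sw S T" and ST: "S \<noteq> T"
    and eS: "\<And>k. Rr A k = Rr S k" and eT: "\<And>k. Rr A k = Rr T k"
    and pS: "phi S \<le> phi A" and pT: "phi T \<le> phi A"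
    and negS: "\<forall>l<length A. A ! l \<noteq> S ! l \<longrightarrow> A ! l < 0"
    and negT: "\<forall>l<length A. A ! l \<noteq> T ! l \<longrightarrow> A ! l < 0"
  shows "\<exists>E. valid E \<and> mset E = mset A \<and> E \<noteq> A \<and> E \<noteq> B \<and> E \<noteq> S \<and> E \<noteq> T"
proof -
  have nTS: "\<not> sw T S" using nST sw_sym by blast
  note n1 = NB[OF vA vS sAS eS pS nAB nST sBT negS]
  note n2 = NB[OF vA vT sAT eT pT nAB nTS sBS negT]
  show ?thesis
  proof (cases "\<exists>E. valid E \<and> mset E = mset A \<and> E \<noteq> A \<and> E \<noteq> S \<and> E \<noteq> B \<and> E \<noteq> T")
    case True then show ?thesis by blast
  next
    case F1: False
    show ?thesis
    proof (cases "\<exists>E. valid E \<and> mset E = mset A \<and> E \<noteq> A \<and> E \<noteq> T \<and> E \<noteq> B \<and> E \<noteq> S")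
      case True then show ?thesis by blast
    next
      case F2: False
      obtain i where i: "Suc i < length A" "S = A[i := A ! Suc i, Suc i := A ! i]"
        "\<forall>l<length A. l \<noteq> i \<longrightarrow> A ! i < A ! l" using n1 F1 by blast
      obtain p where p: "Suc p < length A" "T = A[p := A ! Suc p, Suc p := A ! p]"
        "\<forall>l<length A. l \<noteq> p \<longrightarrow> A ! p < A ! l" using n2 F2 by blast
      have "i = p"
      proof (rule ccontr)
        assume "i \<noteq> p"
        then have "A ! i < A ! p" "A ! p < A ! i" using i(1,3) p(1,3) by auto
        then show False by simp
      qed
      then have "S = T" using i(2) p(2) by simp
      then show ?thesis using ST by simp
    qed
  qed
qed


definition edgeN :: "nat \<Rightarrow> nat list \<Rightarrow> nat list \<Rightarrow> bool" where
  "edgeN n c1 c2 \<longleftrightarrow> (\<exists>i j k. i < n \<and> j < n \<and> i \<noteq> j \<and> 0 < k \<and>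
        c1 ! i = c2 ! i + k \<and> c1 ! j + k = c2 ! j \<and>
        (\<forall>l<n. l \<noteq> i \<longrightarrow> l \<noteq> j \<longrightarrow> c1 ! l = c2 ! l))"

lemma rge_edgeN: "rook_graph_edge B1 B2 \<longleftrightarrow>
  edgeN (max (length B1) (length B2)) (pad (max (length B1) (length B2)) B1) (pad (max (length B1) (length B2)) B2)"
  unfolding rook_graph_edge_def edgeN_def Let_def by simp

lemma nth_clrep:
  assumes "l < m + length p"
  shows "cl (replicate m 0 @ p) ! l = (if l < m then - int l else int (p ! (l - m)) - int l)"
  using assms by (simp add: nth_cl nth_append)

lemma edgeN_sw:
  assumes lp: "length p = n" and lq: "length q = n"
  shows "edgeN n p q \<longleftrightarrow> sw (cl (replicate m 0 @ p)) (cl (replicate m 0 @ q))"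
proof -
  let ?P = "cl (replicate m 0 @ p)" and ?Q = "cl (replicate m 0 @ q)"
  have lP: "length ?P = m + n" using lp by simp
  have lQ: "length ?Q = m + n" using lq by simp
  have nP: "l < m + n \<Longrightarrow> ?P ! l = (if l < m then - int l else int (p ! (l - m)) - int l)" for l
    using nth_clrep[of l m p] lp by simp
  have nQ: "l < m + n \<Longrightarrow> ?Q ! l = (if l < m then - int l else int (q ! (l - m)) - int l)" for l
    using nth_clrep[of l m q] lq by simp
  show ?thesis
  proof
    assume "edgeN n p q"
    then obtain i j k where h: "i < n" "j < n" "i \<noteq> j" "0 < k" "p ! i = q ! i + k" "p ! j + k = q ! j"
      and eq: "\<forall>l<n. l \<noteq> i \<longrightarrow> l \<noteq> j \<longrightarrow> p ! l = q ! l" unfolding edgeN_def by blast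
    show "sw ?P ?Q"
    proof (rule sw_intro)
      show "length ?P = length ?Q" using lP lQ by simp
      show "m + i < length ?P" "m + j < length ?P" "m + i \<noteq> m + j" using h lP by auto
      show "?Q ! (m + i) < ?P ! (m + i)" using h by (simp add: nP nQ)
      show "?P ! (m + i) - ?Q ! (m + i) = ?Q ! (m + j) - ?P ! (m + j)" using h by (simp add: nP nQ)
      show "\<forall>l<length ?P. l \<noteq> m + i \<longrightarrow> l \<noteq> m + j \<longrightarrow> ?P ! l = ?Q ! l"
      proof (intro allI impI)
        fix l assume l: "l < length ?P" "l \<noteq> m + i" "l \<noteq> m + j"
        show "?P ! l = ?Q ! l"
        proof (cases "l < m")
          case True then show ?thesis using l lP by (simp add: nP nQ)
        next
          case False
          then have "l - m < n" "l - m \<noteq> i" "l - m \<noteq> j" using l lP by auto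
          then have "p ! (l - m) = q ! (l - m)" using eq by blast
          then show ?thesis using l lP False by (simp add: nP nQ)
        qed
      qed
    qed
  next
    assume "sw ?P ?Q"
    then obtain i' j' where h: "i' < length ?P" "j' < length ?P" "i' \<noteq> j'" "?Q ! i' < ?P ! i'"
      "?P ! i' - ?Q ! i' = ?Q ! j' - ?P ! j'"
      and eq: "\<forall>l<length ?P. l \<noteq> i' \<longrightarrow> l \<noteq> j' \<longrightarrow> ?P ! l = ?Q ! l" unfolding sw_def by blast
    have i'm: "m \<le> i'"
    proof (rule ccontr)
      assume "\<not> m \<le> i'" then show False using h(1,4) lP by (simp add: nP nQ)
    qed
    have j'm: "m \<le> j'"
    proof (rule ccontr)
      assume "\<not> m \<le> j'" then show False using h(1,2,4,5) lP by (simp add: nP nQ)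
    qed
    define i where "i = i' - m"
    define j where "j = j' - m"
    have hi: "?P ! i' = int (p ! i) - int i'" "?Q ! i' = int (q ! i) - int i'"
      using i'm h(1) lP unfolding i_def by (simp_all add: nP nQ)
    have hj: "?P ! j' = int (p ! j) - int j'" "?Q ! j' = int (q ! j) - int j'"
      using j'm h(2) lP unfolding j_def by (simp_all add: nP nQ)
    define k where "k = p ! i - q ! i"
    have k: "0 < k" "p ! i = q ! i + k" "p ! j + k = q ! j" using h(4,5) hi hj unfolding k_def by auto
    show "edgeN n p q" unfolding edgeN_def
    proof (intro exI conjI)
      show "i < n" "j < n" "i \<noteq> j" using h i'm j'm lP unfolding i_def j_def by auto
      show "0 < k" "p ! i = q ! i + k" "p ! j + k = q ! j" using k by auto
      show "\<forall>l<n. l \<noteq> i \<longrightarrow> l \<noteq> j \<longrightarrow> p ! l = q ! l"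
      proof (intro allI impI)
        fix l assume l: "l < n" "l \<noteq> i" "l \<noteq> j"
        then have "m + l < length ?P" "m + l \<noteq> i'" "m + l \<noteq> j'" using lP i'm j'm unfolding i_def j_def by auto
        then have "?P ! (m + l) = ?Q ! (m + l)" using eq by blast
        then show "p ! l = q ! l" using l by (simp add: nP nQ)
      qed
    qed
  qed
qed


lemma length_pad: "length X \<le> n \<Longrightarrow> length (pad n X) = n"
  unfolding pad_def by simp

lemma pad_pad: "length X \<le> n \<Longrightarrow> n \<le> N \<Longrightarrow> pad N X = replicate (N - n) 0 @ pad n X"
  unfolding pad_def by (simp add: replicate_add[symmetric])

lemma sorted_pad: "sorted X \<Longrightarrow> sorted (pad n X)"
  unfolding pad_def by (auto simp: sorted_append)

lemma edge_cv:
  assumes "length X \<le> N" "length Y \<le> N"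
  shows "rook_graph_edge X Y \<longleftrightarrow> sw (cl (pad N X)) (cl (pad N Y))"
proof -
  let ?n = "max (length X) (length Y)"
  have n: "length X \<le> ?n" "length Y \<le> ?n" "?n \<le> N" using assms by auto
  have "rook_graph_edge X Y \<longleftrightarrow> edgeN ?n (pad ?n X) (pad ?n Y)" by (rule rge_edgeN)
  also have "\<dots> \<longleftrightarrow> sw (cl (replicate (N - ?n) 0 @ pad ?n X)) (cl (replicate (N - ?n) 0 @ pad ?n Y))"
    by (rule edgeN_sw) (use n length_pad in auto)
  also have "replicate (N - ?n) 0 @ pad ?n X = pad N X" using pad_pad[OF n(1) n(3)] by simp
  also have "replicate (N - ?n) 0 @ pad ?n Y = pad N Y" using pad_pad[OF n(2) n(3)] by simp
  finally show ?thesis .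
qed

lemma Rr_cv: "sorted X \<Longrightarrow> Rr (cl (pad N X)) k = int (rook_num X k)"
proof -
  assume sX: "sorted X"
  have "int (rook_num X k) = int (rook_num (pad N X) k)" using rook_num_pad[OF sX] by simp
  also have "\<dots> = Rr (rev (cl (pad N X))) k" using rook_Rr[OF sorted_pad[OF sX]] by simp
  also have "\<dots> = Rr (cl (pad N X)) k" by (rule Rr_mset) simp
  finally show ?thesis by simp
qed

lemma cl_inj: "cl p = cl q \<Longrightarrow> length p = length q \<Longrightarrow> p = q"
proof -
  assume h: "cl p = cl q" and l: "length p = length q"
  show "p = q"
  proof (rule nth_equalityI)
    show "length p = length q" by (rule l)
    fix i assume i: "i < length p"
    have "cl p ! i = cl q ! i" using h by simp
    then show "p ! i = q ! i" using i l by (simp add: nth_cl)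
  qed
qed

lemma reduced_dropWhile: "reduced_board X \<Longrightarrow> dropWhile (\<lambda>t. t = 0) (pad n X) = X"
proof -
  assume r: "reduced_board X"
  have "dropWhile (\<lambda>t. t = 0) (replicate (n - length X) 0 @ X) = dropWhile (\<lambda>t. t = 0) X"
    by (rule dropWhile_append2) simp
  also have "\<dots> = X" by (rule dropWhile_id) (use r in \<open>auto simp: reduced_board_def\<close>)
  finally show ?thesis unfolding pad_def .
qed

lemma cv_inj:
  assumes "reduced_board X" "reduced_board Y" "length X \<le> N" "length Y \<le> N"
    "cl (pad N X) = cl (pad N Y)"
  shows "X = Y"
proof -
  have "pad N X = pad N Y" by (rule cl_inj) (use assms length_pad in auto)
  have "X = dropWhile (\<lambda>t. t = 0) (pad N X)" by (rule sym[OF reduced_dropWhile[OF assms(1)]])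
  also have "\<dots> = dropWhile (\<lambda>t. t = 0) (pad N Y)" by (simp only: \<open>pad N X = pad N Y\<close>)
  also have "\<dots> = Y" by (rule reduced_dropWhile[OF assms(2)])
  finally show ?thesis .
qed

lemma valid_cv: "sorted X \<Longrightarrow> valid (cl (pad N X))"
  by (rule valid_cl[OF sorted_pad])

lemma back_board:
  assumes vE: "valid E"
  defines "R \<equiv> dropWhile (\<lambda>t. t = 0) (board_of E)"
  shows "reduced_board R" "length R \<le> length E" "cl (pad (length E) R) = E"
proof -
  let ?b = "board_of E"
  have sb: "sorted ?b" and cb: "cl ?b = E" and lb: "length ?b = length E" using board_of_props[OF vE] by auto
  have sR: "sorted R" unfolding R_def by (rule sorted_dropWhile[OF sb])
  have pos: "\<forall>x\<in>set R. 0 < x"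
  proof (cases "R = []")
    case False
    have h0: "hd R \<noteq> 0" using hd_dropWhile[of "\<lambda>t. t = 0" ?b] False unfolding R_def by simp
    have "R = hd R # tl R" using False by simp
    then have "\<forall>x\<in>set R. hd R \<le> x" using sR by (metis order_refl set_ConsD sorted_simps(2))
    then show ?thesis using h0 by auto
  qed simp
  show "reduced_board R" unfolding reduced_board_def ferrers_def using sR pos by simp
  have split: "takeWhile (\<lambda>t. t = 0) ?b @ R = ?b" unfolding R_def by simp
  have "length R \<le> length ?b" using split by (metis le_add2 length_append)
  then show "length R \<le> length E" using lb by simp
  have tw: "takeWhile (\<lambda>t. t = 0) ?b = replicate (length (takeWhile (\<lambda>t. t = 0) ?b)) 0"
    by (rule replicate_length_same[symmetric]) (auto dest: set_takeWhileD)
  have lt: "length (takeWhile (\<lambda>t. t = 0) ?b) = length E - length R"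
    using split lb by (metis add_diff_cancel_right' length_append)
  have "pad (length E) R = ?b" unfolding pad_def using split tw lt by metis
  then show "cl (pad (length E) R) = E" using cb by simp
qed


lemma pad_nth_zero: "l < N - length X \<Longrightarrow> pad N X ! l = 0"
  unfolding pad_def by (simp add: nth_append)

lemma pad_nth_le:
  assumes "\<forall>t\<in>set X. t \<le> H" "l < length (pad N X)"
  shows "pad N X ! l \<le> H"
proof -
  have "pad N X ! l \<in> set (pad N X)" using assms(2) by simp
  then have "pad N X ! l = 0 \<or> pad N X ! l \<in> set X" unfolding pad_def by auto
  then show ?thesis using assms(1) by auto
qed

lemma neg_cv:
  assumes "length X \<le> L" "length Y \<le> L" "\<forall>t\<in>set X. t \<le> H" "\<forall>t\<in>set Y. t \<le> H" "N = L + H + 1"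
  shows "\<forall>l<length (cl (pad N X)). cl (pad N X) ! l \<noteq> cl (pad N Y) ! l \<longrightarrow> cl (pad N X) ! l < 0"
proof (intro allI impI)
  fix l assume l: "l < length (cl (pad N X))" and d: "cl (pad N X) ! l \<noteq> cl (pad N Y) ! l"
  have lX: "length (pad N X) = N" using assms by (simp add: length_pad)
  have lY: "length (pad N Y) = N" using assms by (simp add: length_pad)
  have lN: "l < N" using l lX by simp
  have "\<not> l \<le> H"
  proof
    assume "l \<le> H"
    then have "l < N - length X" "l < N - length Y" using assms by auto
    then have "pad N X ! l = 0" "pad N Y ! l = 0" by (auto intro: pad_nth_zero)
    then show False using d lN lX lY by (simp add: nth_cl)
  qed
  moreover have "pad N X ! l \<le> H" using pad_nth_le[OF assms(3)] lN lX by simp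
  ultimately show "cl (pad N X) ! l < 0" using lN lX by (simp add: nth_cl)
qed

lemma role:
  assumes red: "reduced_board A0" "reduced_board B0" "reduced_board S0" "reduced_board T0"
    and len: "length A0 \<le> L" "length B0 \<le> L" "length S0 \<le> L" "length T0 \<le> L"
    and ent: "\<forall>t\<in>set A0. t \<le> H" "\<forall>t\<in>set S0. t \<le> H" "\<forall>t\<in>set T0. t \<le> H"
    and N: "N = L + H + 1"
    and req: "\<And>k. rook_num A0 k = rook_num S0 k" "\<And>k. rook_num A0 k = rook_num T0 k"
    and e: "rook_graph_edge A0 S0" "rook_graph_edge A0 T0" "rook_graph_edge B0 S0" "rook_graph_edge B0 T0"
      "\<not> rook_graph_edge A0 B0" "\<not> rook_graph_edge S0 T0"
    and ST: "S0 \<noteq> T0"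
    and ph: "phi (cl (pad N S0)) \<le> phi (cl (pad N A0))" "phi (cl (pad N T0)) \<le> phi (cl (pad N A0))"
  shows "\<exists>E. valid E \<and> mset E = mset (cl (pad N A0)) \<and> E \<noteq> cl (pad N A0) \<and>
           E \<noteq> cl (pad N B0) \<and> E \<noteq> cl (pad N S0) \<and> E \<noteq> cl (pad N T0)"
proof -
  have srt: "sorted A0" "sorted S0" "sorted T0" using red unfolding reduced_board_def ferrers_def by auto
  have lN: "length A0 \<le> N" "length B0 \<le> N" "length S0 \<le> N" "length T0 \<le> N" using len N by auto
  have sw: "sw (cl (pad N A0)) (cl (pad N S0))" "sw (cl (pad N A0)) (cl (pad N T0))"
    "sw (cl (pad N B0)) (cl (pad N S0))" "sw (cl (pad N B0)) (cl (pad N T0))"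
    "\<not> sw (cl (pad N A0)) (cl (pad N B0))" "\<not> sw (cl (pad N S0)) (cl (pad N T0))"
    using e edge_cv lN by auto
  have ST': "cl (pad N S0) \<noteq> cl (pad N T0)" using cv_inj[OF red(3,4) lN(3,4)] ST by blast
  have eS: "Rr (cl (pad N A0)) k = Rr (cl (pad N S0)) k" for k
    using Rr_cv[OF srt(1)] Rr_cv[OF srt(2)] req(1) by simp
  have eT: "Rr (cl (pad N A0)) k = Rr (cl (pad N T0)) k" for k
    using Rr_cv[OF srt(1)] Rr_cv[OF srt(3)] req(2) by simp
  show ?thesis
    by (rule CORE[OF valid_cv[OF srt(1)] valid_cv[OF srt(2)] valid_cv[OF srt(3)] sw ST' eS eT ph
          neg_cv[OF len(1) len(3) ent(1) ent(2) N] neg_cv[OF len(1) len(4) ent(1) ent(3) N]])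
qed


theorem theorem12:
  fixes B :: "nat list"
  assumes "ferrers B"
  shows "\<not> graph_iso_K22 (rook_graph_vertices B) rook_graph_edge"
proof
  let ?V = "rook_graph_vertices B"
  assume "graph_iso_K22 ?V rook_graph_edge"
  then obtain f where bij: "bij_betw f ?V {0..<4::nat}"
    and iso: "\<forall>x\<in>?V. \<forall>y\<in>?V. rook_graph_edge x y \<longleftrightarrow> k22_adj (f x) (f y)"
    unfolding graph_iso_K22_def by blast
  have img: "f ` ?V = {0..<4}" and inj: "inj_on f ?V" using bij by (auto simp: bij_betw_def)
  have "0 \<in> f ` ?V" using img by simp
  then obtain a0 where a0: "a0 \<in> ?V" "f a0 = 0" by (metis imageE)
  have "1 \<in> f ` ?V" using img by simp
  then obtain a1 where a1: "a1 \<in> ?V" "f a1 = 1" by (metis imageE)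
  have "2 \<in> f ` ?V" using img by simp
  then obtain c0 where c0: "c0 \<in> ?V" "f c0 = 2" by (metis imageE)
  have "3 \<in> f ` ?V" using img by simp
  then obtain c1 where c1: "c1 \<in> ?V" "f c1 = 3" by (metis imageE)
  have memV: "reduced_board X \<and> (\<forall>k. rook_num X k = rook_num B k)" if "X \<in> ?V" for X
    using that unfolding rook_graph_vertices_def rook_equiv_def by auto
  have allV: "X = a0 \<or> X = a1 \<or> X = c0 \<or> X = c1" if X: "X \<in> ?V" for X
  proof -
    have "f X \<in> {0..<4}" using img X by blast
    then have "f X = 0 \<or> f X = 1 \<or> f X = 2 \<or> f X = 3" by auto
    then show ?thesis using inj X a0 a1 c0 c1 unfolding inj_on_def by metis
  qed
  have ed: "rook_graph_edge a0 c0" "rook_graph_edge a0 c1" "rook_graph_edge a1 c0" "rook_graph_edge a1 c1"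
    "rook_graph_edge c0 a0" "rook_graph_edge c1 a0" "rook_graph_edge c0 a1" "rook_graph_edge c1 a1"
    "\<not> rook_graph_edge a0 a1" "\<not> rook_graph_edge a1 a0" "\<not> rook_graph_edge c0 c1" "\<not> rook_graph_edge c1 c0"
    using iso a0 a1 c0 c1 by (auto simp: k22_adj_def)
  have ne: "a0 \<noteq> a1" "c0 \<noteq> c1" using a0 a1 c0 c1 by auto
  define L where "L = length a0 + length a1 + length c0 + length c1"
  define H where "H = sum_list a0 + sum_list a1 + sum_list c0 + sum_list c1"
  define N where "N = L + H + 1"
  have len: "length a0 \<le> L" "length a1 \<le> L" "length c0 \<le> L" "length c1 \<le> L" unfolding L_def by auto
  have entH: "\<forall>t\<in>set X. t \<le> H" if "X \<in> {a0, a1, c0, c1}" for X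
  proof
    fix t assume "t \<in> set X"
    then have "t \<le> sum_list X" by (simp add: member_le_sum_list)
    then show "t \<le> H" using that unfolding H_def by auto
  qed
  have ent: "\<forall>t\<in>set a0. t \<le> H" "\<forall>t\<in>set a1. t \<le> H" "\<forall>t\<in>set c0. t \<le> H" "\<forall>t\<in>set c1. t \<le> H"
    using entH by auto
  have red: "reduced_board a0" "reduced_board a1" "reduced_board c0" "reduced_board c1"
    using memV a0 a1 c0 c1 by auto
  have rq: "\<And>k. rook_num X k = rook_num B k" if "X \<in> {a0, a1, c0, c1}" for X
    using memV a0 a1 c0 c1 that by auto
  have rq4: "rook_num X k = rook_num Y k" if "X \<in> {a0, a1, c0, c1}" "Y \<in> {a0, a1, c0, c1}" for X Y k
    using rq[OF that(1)] rq[OF that(2)] by simp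
  let ?P = "\<lambda>X. phi (cl (pad N X))"
  let ?C = "\<lambda>X. cl (pad N X)"
  have "\<exists>E. valid E \<and> (\<exists>X\<in>{a0, a1, c0, c1}. mset E = mset (?C X)) \<and>
          E \<noteq> ?C a0 \<and> E \<noteq> ?C a1 \<and> E \<noteq> ?C c0 \<and> E \<noteq> ?C c1"
  proof -
    have cases4: "(?P c0 \<le> ?P a0 \<and> ?P c1 \<le> ?P a0) \<or> (?P c0 \<le> ?P a1 \<and> ?P c1 \<le> ?P a1) \<or>
      (?P a0 \<le> ?P c0 \<and> ?P a1 \<le> ?P c0) \<or> (?P a0 \<le> ?P c1 \<and> ?P a1 \<le> ?P c1)" by linarith
    then show ?thesis
    proof (elim disjE conjE)
      assume p: "?P c0 \<le> ?P a0" "?P c1 \<le> ?P a0"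
      obtain E where "valid E" "mset E = mset (?C a0)" "E \<noteq> ?C a0" "E \<noteq> ?C a1" "E \<noteq> ?C c0" "E \<noteq> ?C c1"
        using role[OF red(1,2,3,4) len(1,2,3,4) ent(1,3,4) N_def rq4 rq4 ed(1,2,3,4,9,11) ne(2) p] by auto
      then show ?thesis by blast
    next
      assume p: "?P c0 \<le> ?P a1" "?P c1 \<le> ?P a1"
      obtain E where "valid E" "mset E = mset (?C a1)" "E \<noteq> ?C a1" "E \<noteq> ?C a0" "E \<noteq> ?C c0" "E \<noteq> ?C c1"
        using role[OF red(2,1,3,4) len(2,1,3,4) ent(2,3,4) N_def rq4 rq4 ed(3,4,1,2,10,11) ne(2) p] by auto
      then show ?thesis by blast
    next
      assume p: "?P a0 \<le> ?P c0" "?P a1 \<le> ?P c0"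
      obtain E where "valid E" "mset E = mset (?C c0)" "E \<noteq> ?C c0" "E \<noteq> ?C c1" "E \<noteq> ?C a0" "E \<noteq> ?C a1"
        using role[OF red(3,4,1,2) len(3,4,1,2) ent(3,1,2) N_def rq4 rq4 ed(5,7,6,8,11,9) ne(1) p] by auto
      then show ?thesis by blast
    next
      assume p: "?P a0 \<le> ?P c1" "?P a1 \<le> ?P c1"
      obtain E where "valid E" "mset E = mset (?C c1)" "E \<noteq> ?C c1" "E \<noteq> ?C c0" "E \<noteq> ?C a0" "E \<noteq> ?C a1"
        using role[OF red(4,3,1,2) len(4,3,1,2) ent(4,1,2) N_def rq4 rq4 ed(6,8,5,7,12,9) ne(1) p] by auto
      then show ?thesis by blast
    qed
  qed
  then obtain E X0 where E: "valid E" "X0 \<in> {a0, a1, c0, c1}" "mset E = mset (?C X0)"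
    "E \<noteq> ?C a0" "E \<noteq> ?C a1" "E \<noteq> ?C c0" "E \<noteq> ?C c1" by blast
  have X0N: "length X0 \<le> N" using E(2) len unfolding N_def by auto
  have lE: "length E = N" using mset_eq_length[OF E(3)] length_pad[OF X0N] by simp
  define R where "R = dropWhile (\<lambda>t. t = 0) (board_of E)"
  have R: "reduced_board R" "length R \<le> N" "cl (pad N R) = E"
    using back_board[OF E(1)] lE unfolding R_def by auto
  have sR: "sorted R" using R(1) unfolding reduced_board_def ferrers_def by simp
  have sX0: "sorted X0" using E(2) red unfolding reduced_board_def ferrers_def by auto
  have "rook_num R k = rook_num B k" for k
  proof -
    have "int (rook_num R k) = Rr (cl (pad N R)) k" using Rr_cv[OF sR] by simp
    also have "\<dots> = Rr (?C X0) k" unfolding R(3) by (rule Rr_mset[OF E(3)])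
    also have "\<dots> = int (rook_num X0 k)" by (rule Rr_cv[OF sX0])
    also have "\<dots> = int (rook_num B k)" using rq[OF E(2)] by simp
    finally show ?thesis by simp
  qed
  then have "R \<in> ?V" using R(1) unfolding rook_graph_vertices_def rook_equiv_def by auto
  then have "R = a0 \<or> R = a1 \<or> R = c0 \<or> R = c1" by (rule allV)
  then show False using R(3) E(4-7) by auto
qed

end
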